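(* Let $\mathcal{I}$ be any ideal of the multiloop algebra $\mathcal{L}$ and let $I=I(\mathcal{I})\subseteq R$. Then $$\mathcal{I}=\mathcal{L}\cap(\mathfrak{g}\otimes I)=\bigoplus_{\bar k\in G}\mathfrak{g}_{\bar k}\otimes I_{\bar k},$$ where $I_{\bar k}=I\cap R_{\bar k}$.
   Context: $F$ is an algebraically closed field of characteristic zero; $\mathfrak{g}$ is a finite-dimensional simple Lie algebra over $F$; $\sigma_1,\dots,\sigma_N$ are pairwise commuting automorphisms of $\mathfrak{g}$ of finite orders $m_1,\dots,m_N$; for each $i$, $\xi_i\in F$ is a fixed primitive $m_i$-th root of unity. Let $G=\mathbb{Z}/m_1\mathbb{Z}\times\cdots\times\mathbb{Z}/m_N\mathbb{Z}$ and write $\bar k$ for the image of $k\in\mathbb{Z}^N$ in $G$. Set $\mathfrak{g}_{\bar k}=\{x\in\mathfrak{g}: \sigma_i x=\xi_i^{k_i}x \text{ for } i=1,\dots,N\}$. Let $R=F[t_1^{\pm1},\dots,t_N^{\pm1}]$, $t^k=t_1^{k_1}\cdots t_N^{k_N}$, $R_{\bar 0}=F[t_1^{\pm m_1},\dots,t_N^{\pm m_N}]$ and $R_{\bar k}=t^kR_{\bar 0}$. The multiloop algebra is $\mathcal{L}=\bigoplus_{k\in\mathbb{Z}^N}\mathfrak{g}_{\bar k}\otimes Ft^k=\bigoplus_{\bar k\in G}\mathfrak{g}_{\bar k}\otimes R_{\bar k}\subseteq \mathfrak{g}\otimes R$, with bracket $[x\otimes f,y\otimes g]=[x,y]\otimes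 fg$. For each $\bar k\in G$ fix a basis $\{x_{\bar k j}\}_j$ of $\mathfrak{g}_{\bar k}$, and let $\pi_{\bar kj}:\mathcal{L}\to R_{\bar k}$ be the projection onto the summand $Fx_{\bar kj}\otimes R_{\bar k}$ of $\mathcal{L}=\bigoplus_{\bar k}\bigoplus_j Fx_{\bar kj}\otimes R_{\bar k}$ followed by $x_{\bar kj}\otimes f\mapsto f$. For an ideal $\mathcal{I}$ of $\mathcal{L}$, $I(\mathcal{I})$ denotes the ideal of $R$ generated by $\bigcup_{\bar k\in G}\bigcup_j \pi_{\bar kj}(\mathcal{I})$ (it is independent of the chosen bases and $G$-graded). *)

theory Defs
  imports Main "HOL-Computational_Algebra.Polynomial"
begin

definition alg_closed_field :: "'f::field itself \<Rightarrow> bool" where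
  "alg_closed_field _ \<longleftrightarrow> (\<forall>p::'f poly. degree p > 0 \<longrightarrow> (\<exists>x. poly p x = 0))"

(* finite-dimensional Lie algebra over 'f, carried by the whole type 'v *)
definition fd_lie_algebra ::
  "('f::field \<Rightarrow> 'v::ab_group_add \<Rightarrow> 'v) \<Rightarrow> ('v \<Rightarrow> 'v \<Rightarrow> 'v) \<Rightarrow> bool" where
  "fd_lie_algebra sc br \<longleftrightarrow>
     (\<exists>Bs. finite_dimensional_vector_space sc Bs) \<and>
     (\<forall>x y z. br (x + y) z = br x z + br y z) \<and>
     (\<forall>x y z. br x (y + z) = br x y + br x z) \<and>
     (\<forall>a x y. br (sc a x) y = sc a (br x y)) \<and>
     (\<forall>a x y. br x (sc a y) = sc a (br x y)) \<and>
     (\<forall>x. br x x = 0) \<and>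
     (\<forall>x y z. br x (br y z) + br y (br z x) + br z (br x y) = 0)"

definition lie_ideal ::
  "('f::field \<Rightarrow> 'v::ab_group_add \<Rightarrow> 'v) \<Rightarrow> ('v \<Rightarrow> 'v \<Rightarrow> 'v) \<Rightarrow> 'v set \<Rightarrow> bool" where
  "lie_ideal sc br J \<longleftrightarrow> module.subspace sc J \<and> (\<forall>x\<in>J. \<forall>y. br y x \<in> J)"

definition simple_lie_algebra ::
  "('f::field \<Rightarrow> 'v::ab_group_add \<Rightarrow> 'v) \<Rightarrow> ('v \<Rightarrow> 'v \<Rightarrow> 'v) \<Rightarrow> bool" where
  "simple_lie_algebra sc br \<longleftrightarrow> fd_lie_algebra sc br \<and> (\<exists>x y. br x y \<noteq> 0) \<and>
     (\<forall>J. lie_ideal sc br J \<longrightarrow> J = {0} \<or> J = UNIV)"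

definition lie_automorphism ::
  "('f::field \<Rightarrow> 'v::ab_group_add \<Rightarrow> 'v) \<Rightarrow> ('v \<Rightarrow> 'v \<Rightarrow> 'v) \<Rightarrow> ('v \<Rightarrow> 'v) \<Rightarrow> bool" where
  "lie_automorphism sc br s \<longleftrightarrow> bij s \<and> (\<forall>x y. s (x + y) = s x + s y) \<and>
     (\<forall>a x. s (sc a x) = sc a (s x)) \<and> (\<forall>x y. s (br x y) = br (s x) (s y))"

definition has_order :: "('v \<Rightarrow> 'v) \<Rightarrow> nat \<Rightarrow> bool" where
  "has_order s n \<longleftrightarrow> n > 0 \<and> (s ^^ n) = id \<and> (\<forall>j. 0 < j \<and> j < n \<longrightarrow> (s ^^ j) \<noteq> id)"

definition primitive_root :: "'f::field \<Rightarrow> nat \<Rightarrow> bool" where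
  "primitive_root z n \<longleftrightarrow> n > 0 \<and> z ^ n = 1 \<and> (\<forall>j. 0 < j \<and> j < n \<longrightarrow> z ^ j \<noteq> 1)"

(* k :: nat \<Rightarrow> int represents an element of Z^N (coordinates i < N; zero beyond) *)
definition valid_exp :: "nat \<Rightarrow> (nat \<Rightarrow> int) \<Rightarrow> bool" where
  "valid_exp N k \<longleftrightarrow> (\<forall>i\<ge>N. k i = 0)"

(* image \<bar>k\<bar> of k in G = Z/m_1 \<times> ... \<times> Z/m_N, canonical representative *)
definition cls :: "nat \<Rightarrow> (nat \<Rightarrow> nat) \<Rightarrow> (nat \<Rightarrow> int) \<Rightarrow> (nat \<Rightarrow> int)" where
  "cls N m k = (\<lambda>i. if i < N then k i mod int (m i) else 0)"

(* R = F[t_1^{\<pm>1},...,t_N^{\<pm>1}]: f k is the coefficient of t^k *)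
definition laurent :: "nat \<Rightarrow> ((nat \<Rightarrow> int) \<Rightarrow> 'f::zero) set" where
  "laurent N = {f. finite {k. f k \<noteq> 0} \<and> (\<forall>k. f k \<noteq> 0 \<longrightarrow> valid_exp N k)}"

definition lmult :: "((nat \<Rightarrow> int) \<Rightarrow> 'f::comm_ring_1) \<Rightarrow> ((nat \<Rightarrow> int) \<Rightarrow> 'f) \<Rightarrow> (nat \<Rightarrow> int) \<Rightarrow> 'f" where
  "lmult f g = (\<lambda>k. \<Sum>a\<in>{a. f a \<noteq> 0}. f a * g (\<lambda>i. k i - a i))"

definition ring_ideal :: "nat \<Rightarrow> ((nat \<Rightarrow> int) \<Rightarrow> 'f::comm_ring_1) set \<Rightarrow> bool" where
  "ring_ideal N J \<longleftrightarrow> J \<subseteq> laurent N \<and> (\<lambda>_. 0) \<in> J \<and>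
     (\<forall>f\<in>J. \<forall>g\<in>J. (\<lambda>k. f k + g k) \<in> J) \<and>
     (\<forall>f\<in>laurent N. \<forall>g\<in>J. lmult f g \<in> J)"

definition gen_ideal :: "nat \<Rightarrow> ((nat \<Rightarrow> int) \<Rightarrow> 'f::comm_ring_1) set \<Rightarrow> ((nat \<Rightarrow> int) \<Rightarrow> 'f) set" where
  "gen_ideal N S = \<Inter> {J. ring_ideal N J \<and> S \<subseteq> J}"

definition laurent_cls :: "nat \<Rightarrow> (nat \<Rightarrow> nat) \<Rightarrow> (nat \<Rightarrow> int) \<Rightarrow> ((nat \<Rightarrow> int) \<Rightarrow> 'f::zero) set" where
  "laurent_cls N m c = {f \<in> laurent N. \<forall>k. f k \<noteq> 0 \<longrightarrow> cls N m k = c}"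

(* g \<otimes> R, realised as finitely supported functions Z^N \<Rightarrow> g  (X k = coefficient of t^k) *)
definition gR :: "nat \<Rightarrow> ((nat \<Rightarrow> int) \<Rightarrow> 'v::zero) set" where
  "gR N = {X. finite {k. X k \<noteq> 0} \<and> (\<forall>k. X k \<noteq> 0 \<longrightarrow> valid_exp N k)}"

definition tns :: "('f \<Rightarrow> 'v \<Rightarrow> 'v) \<Rightarrow> 'v \<Rightarrow> ((nat \<Rightarrow> int) \<Rightarrow> 'f) \<Rightarrow> (nat \<Rightarrow> int) \<Rightarrow> 'v" where
  "tns sc x f = (\<lambda>k. sc (f k) x)"

definition g_tensor :: "('f \<Rightarrow> 'v::comm_monoid_add \<Rightarrow> 'v) \<Rightarrow> ((nat \<Rightarrow> int) \<Rightarrow> 'f) set \<Rightarrow> ((nat \<Rightarrow> int) \<Rightarrow> 'v) set" where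
  "g_tensor sc I = {(\<lambda>k. \<Sum>j<n. tns sc (xs j) (fs j) k) | (n::nat) xs fs. \<forall>j<n. fs j \<in> I}"

definition gR_bracket :: "('v \<Rightarrow> 'v \<Rightarrow> 'v::comm_monoid_add) \<Rightarrow> ((nat \<Rightarrow> int) \<Rightarrow> 'v) \<Rightarrow> ((nat \<Rightarrow> int) \<Rightarrow> 'v) \<Rightarrow> (nat \<Rightarrow> int) \<Rightarrow> 'v" where
  "gR_bracket br X Y = (\<lambda>k. \<Sum>a\<in>{a. X a \<noteq> 0}. br (X a) (Y (\<lambda>i. k i - a i)))"

definition g_cls :: "('f::field \<Rightarrow> 'v \<Rightarrow> 'v) \<Rightarrow> nat \<Rightarrow> (nat \<Rightarrow> 'v \<Rightarrow> 'v) \<Rightarrow> (nat \<Rightarrow> 'f) \<Rightarrow> (nat \<Rightarrow> int) \<Rightarrow> 'v set" where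
  "g_cls sc N \<sigma> \<xi> c = {x. \<forall>i<N. \<sigma> i x = sc (\<xi> i powi c i) x}"

definition multiloop :: "('f::field \<Rightarrow> 'v::zero \<Rightarrow> 'v) \<Rightarrow> nat \<Rightarrow> (nat \<Rightarrow> 'v \<Rightarrow> 'v) \<Rightarrow> (nat \<Rightarrow> 'f) \<Rightarrow> ((nat \<Rightarrow> int) \<Rightarrow> 'v) set" where
  "multiloop sc N \<sigma> \<xi> = {X \<in> gR N. \<forall>k. X k \<in> g_cls sc N \<sigma> \<xi> k}"

definition multiloop_ideal :: "('f::field \<Rightarrow> 'v::ab_group_add \<Rightarrow> 'v) \<Rightarrow> ('v \<Rightarrow> 'v \<Rightarrow> 'v) \<Rightarrow> nat \<Rightarrow> (nat \<Rightarrow> 'v \<Rightarrow> 'v) \<Rightarrow> (nat \<Rightarrow> 'f) \<Rightarrow> ((nat \<Rightarrow> int) \<Rightarrow> 'v) set \<Rightarrow> bool" where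
  "multiloop_ideal sc br N \<sigma> \<xi> J \<longleftrightarrow> J \<subseteq> multiloop sc N \<sigma> \<xi> \<and> (\<lambda>_. 0) \<in> J \<and>
     (\<forall>X\<in>J. \<forall>Y\<in>J. (\<lambda>k. X k + Y k) \<in> J) \<and>
     (\<forall>a. \<forall>X\<in>J. (\<lambda>k. sc a (X k)) \<in> J) \<and>
     (\<forall>X\<in>multiloop sc N \<sigma> \<xi>. \<forall>Y\<in>J. gR_bracket br X Y \<in> J)"

(* \<pi>_{c,v}: coordinate w.r.t. basis vector v of the chosen basis B c of g_c, on the class-c part *)
definition proj :: "('f::field \<Rightarrow> 'v::ab_group_add \<Rightarrow> 'v) \<Rightarrow> nat \<Rightarrow> (nat \<Rightarrow> nat) \<Rightarrow> ((nat \<Rightarrow> int) \<Rightarrow> 'v set) \<Rightarrow> (nat \<Rightarrow> int) \<Rightarrow> 'v \<Rightarrow> ((nat \<Rightarrow> int) \<Rightarrow> 'v) \<Rightarrow> (nat \<Rightarrow> int) \<Rightarrow> 'f" where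
  "proj sc N m B c v X = (\<lambda>k. if valid_exp N k \<and> cls N m k = c then module.representation sc (B c) (X k) v else 0)"

definition assoc_ideal :: "('f::field \<Rightarrow> 'v::ab_group_add \<Rightarrow> 'v) \<Rightarrow> nat \<Rightarrow> (nat \<Rightarrow> nat) \<Rightarrow> ((nat \<Rightarrow> int) \<Rightarrow> 'v set) \<Rightarrow> ((nat \<Rightarrow> int) \<Rightarrow> 'v) set \<Rightarrow> ((nat \<Rightarrow> int) \<Rightarrow> 'f) set" where
  "assoc_ideal sc N m B J = gen_ideal N
     {proj sc N m B (cls N m k) v X | k v X. valid_exp N k \<and> v \<in> B (cls N m k) \<and> X \<in> J}"

definition graded_tensor :: "('f::field \<Rightarrow> 'v::ab_group_add \<Rightarrow> 'v) \<Rightarrow> nat \<Rightarrow> (nat \<Rightarrow> nat) \<Rightarrow> (nat \<Rightarrow> 'v \<Rightarrow> 'v) \<Rightarrow> (nat \<Rightarrow> 'f) \<Rightarrow> ((nat \<Rightarrow> int) \<Rightarrow> 'f) set \<Rightarrow> ((nat \<Rightarrow> int) \<Rightarrow> 'v) set" where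
  "graded_tensor sc N m \<sigma> \<xi> I = {(\<lambda>k. \<Sum>j<n. tns sc (xs j) (fs j) k) | (n::nat) xs fs.
      \<forall>j<n. \<exists>c. valid_exp N c \<and> xs j \<in> g_cls sc N \<sigma> \<xi> c \<and> fs j \<in> I \<inter> laurent_cls N m c}"

end

theory Submission
  imports Defs
begin


locale ml =
  fixes sc :: "'f::field_char_0 \<Rightarrow> 'v::ab_group_add \<Rightarrow> 'v"
    and br :: "'v \<Rightarrow> 'v \<Rightarrow> 'v"
    and N :: nat and m :: "nat \<Rightarrow> nat"
    and \<sigma> :: "nat \<Rightarrow> 'v \<Rightarrow> 'v" and \<xi> :: "nat \<Rightarrow> 'f"
    and Bs :: "'v set"
  assumes fdv: "finite_dimensional_vector_space sc Bs"
    and acf: "alg_closed_field TYPE('f)"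
    and sla: "simple_lie_algebra sc br"
    and aut: "\<And>i. i < N \<Longrightarrow> lie_automorphism sc br (\<sigma> i)"
    and comm: "\<And>i j. i < N \<Longrightarrow> j < N \<Longrightarrow> \<sigma> i \<circ> \<sigma> j = \<sigma> j \<circ> \<sigma> i"
    and ord: "\<And>i. i < N \<Longrightarrow> has_order (\<sigma> i) (m i)"
    and prim: "\<And>i. i < N \<Longrightarrow> primitive_root (\<xi> i) (m i)"
begin

sublocale V: finite_dimensional_vector_space sc Bs by (rule fdv)

definition lin :: "('v \<Rightarrow> 'v) \<Rightarrow> bool" where
  "lin f \<longleftrightarrow> (\<forall>x y. f (x + y) = f x + f y) \<and> (\<forall>a x. f (sc a x) = sc a (f x))"

lemma lin_add: "lin f \<Longrightarrow> f (x + y) = f x + f y" by (simp add: lin_def)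
lemma lin_scale: "lin f \<Longrightarrow> f (sc a x) = sc a (f x)" by (simp add: lin_def)
lemma lin_zero: "lin f \<Longrightarrow> f 0 = 0"
  by (metis lin_scale V.scale_zero_left)
lemma lin_sum: "lin f \<Longrightarrow> f (\<Sum>j\<in>S. g j) = (\<Sum>j\<in>S. f (g j))"
  by (induction S rule: infinite_finite_induct) (auto simp: lin_zero lin_add)
lemma lin_neg: "lin f \<Longrightarrow> f (- x) = - f x"
  by (metis lin_scale V.scale_minus_left V.scale_one)
lemma lin_diff: "lin f \<Longrightarrow> f (x - y) = f x - f y"
  by (metis diff_conv_add_uminus lin_add lin_neg)
lemma lin_comp: "lin f \<Longrightarrow> lin g \<Longrightarrow> lin (f \<circ> g)" by (simp add: lin_def)
lemma lin_id: "lin (\<lambda>x. x)" by (simp add: lin_def)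
lemma lin_plus: "lin f \<Longrightarrow> lin g \<Longrightarrow> lin (\<lambda>x. f x + g x)"
  by (simp add: lin_def V.scale_right_distrib algebra_simps)
lemma lin_scf: "lin f \<Longrightarrow> lin (\<lambda>x. sc r (f x))"
  by (simp add: lin_def V.scale_right_distrib V.scale_left_commute)
lemma lin_sumf: "(\<And>j. j \<in> S \<Longrightarrow> lin (f j)) \<Longrightarrow> lin (\<lambda>x. \<Sum>j\<in>S. f j x)"
  by (induction S rule: infinite_finite_induct) (auto simp: lin_def sum.distrib V.scale_sum_right V.scale_right_distrib)
lemma lin_pow: "lin f \<Longrightarrow> lin (f ^^ n)"
  by (induction n) (auto simp: lin_def)
lemma lin_linear: "lin f \<Longrightarrow> Vector_Spaces.linear sc sc f"
  by (simp add: lin_def linear_iff_module_hom module_hom_iff V.module_axioms)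
lemma linear_lin: "Vector_Spaces.linear sc sc f \<Longrightarrow> lin f"
  by (simp add: lin_def linear_iff_module_hom module_hom_iff)

lemma br_props:
  "br (x + y) z = br x z + br y z" "br x (y + z) = br x y + br x z"
  "br (sc a x) y = sc a (br x y)" "br x (sc a y) = sc a (br x y)"
  using sla by (auto simp: simple_lie_algebra_def fd_lie_algebra_def)

lemma lin_br: "lin (br x)" by (simp add: lin_def br_props)
lemma br_zero_left[simp]: "br 0 y = 0"
  by (metis V.scale_zero_left br_props(3))
lemma br_zero_right[simp]: "br x 0 = 0" using lin_zero[OF lin_br] .

lemma nontriv: "\<exists>x y. br x y \<noteq> 0" using sla by (simp add: simple_lie_algebra_def)
lemma simple: "lie_ideal sc br J \<Longrightarrow> J = {0} \<or> J = UNIV"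
  using sla by (simp add: simple_lie_algebra_def)

lemma m_pos: "i < N \<Longrightarrow> m i > 0" using ord by (simp add: has_order_def)
lemma sig_m: "i < N \<Longrightarrow> (\<sigma> i ^^ m i) = id" using ord by (simp add: has_order_def)
lemma lin_sig: "i < N \<Longrightarrow> lin (\<sigma> i)" using aut by (simp add: lin_def lie_automorphism_def)
lemma sig_br: "i < N \<Longrightarrow> \<sigma> i (br x y) = br (\<sigma> i x) (\<sigma> i y)"
  using aut by (simp add: lie_automorphism_def)
lemma xi_m: "i < N \<Longrightarrow> \<xi> i ^ m i = 1" using prim by (simp add: primitive_root_def)
lemma xi_nz: "i < N \<Longrightarrow> \<xi> i \<noteq> 0" using xi_m m_pos by (metis power_0_left less_not_refl2 zero_neq_one)

lemma xi_powi_mod: assumes "i < N" shows "\<xi> i powi r = \<xi> i powi (r mod int (m i))"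
proof -
  have "r = r mod int (m i) + int (m i) * (r div int (m i))" by simp
  then have "\<xi> i powi r = \<xi> i powi (r mod int (m i)) * \<xi> i powi (int (m i) * (r div int (m i)))"
    by (metis power_int_add xi_nz[OF assms])
  also have "\<xi> i powi (int (m i) * (r div int (m i))) = (\<xi> i powi int (m i)) powi (r div int (m i))"
    by (simp add: power_int_mult)
  also have "\<xi> i powi int (m i) = 1" using xi_m[OF assms] by simp
  finally show ?thesis by simp
qed

lemma xi_powi_one: assumes "i < N" shows "\<xi> i powi r = 1 \<longleftrightarrow> int (m i) dvd r"
proof -
  have mp: "int (m i) > 0" using m_pos[OF assms] by simp
  have "\<xi> i powi r = \<xi> i ^ nat (r mod int (m i))"
    using xi_powi_mod[OF assms, of r] mp by (simp add: power_int_def)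
  moreover have "nat (r mod int (m i)) < m i" using mp by (simp add: nat_less_iff)
  ultimately have "\<xi> i powi r = 1 \<longleftrightarrow> nat (r mod int (m i)) = 0"
    using prim[OF assms] unfolding primitive_root_def by (metis gr0I power_0)
  also have "\<dots> \<longleftrightarrow> r mod int (m i) = 0" using mp pos_mod_sign[of "int (m i)" r] by linarith
  finally show ?thesis by (simp add: dvd_eq_mod_eq_0)
qed

end


context ml begin

lemma powi_pow: "(x::'f) powi (r * int j) = (x powi r) ^ j"
  by (simp add: power_int_mult)

lemma geo: assumes "i < N"
  shows "(\<Sum>j<m i. (\<xi> i powi r) ^ j) = (if int (m i) dvd r then of_nat (m i) else 0)"
proof (cases "int (m i) dvd r")
  case True
  then have "\<xi> i powi r = 1" using xi_powi_one[OF assms] by simp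
  then show ?thesis using True by simp
next
  case False
  then have ne: "\<xi> i powi r \<noteq> 1" using xi_powi_one[OF assms] by simp
  have "(\<xi> i powi r) ^ m i = \<xi> i powi (r * int (m i))" by (simp add: powi_pow)
  also have "\<dots> = 1" using xi_powi_one[OF assms] by simp
  finally show ?thesis using ne False by (simp add: sum_gp_strict)
qed

lemma sig_pow_comm: assumes "i < N" "i' < N"
  shows "\<sigma> i' ((\<sigma> i ^^ j) x) = (\<sigma> i ^^ j) (\<sigma> i' x)"
proof (induction j)
  case (Suc j)
  have "\<sigma> i' (\<sigma> i y) = \<sigma> i (\<sigma> i' y)" for y
    using comm[OF assms] by (metis comp_apply)
  then show ?case using Suc by simp
qed simp

definition E :: "nat \<Rightarrow> int \<Rightarrow> 'v \<Rightarrow> 'v" where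
  "E i s x = sc (inverse (of_nat (m i))) (\<Sum>j<m i. sc (\<xi> i powi (- (s * int j))) ((\<sigma> i ^^ j) x))"

lemma lin_E: "i < N \<Longrightarrow> lin (E i s)"
  unfolding E_def[abs_def]
  by (intro lin_scf lin_sumf lin_pow lin_sig) simp

lemma E_comm: assumes "i < N" "i' < N" shows "\<sigma> i' (E i s x) = E i s (\<sigma> i' x)"
  unfolding E_def using lin_sig[OF assms(2)]
  by (simp add: lin_scale lin_sum sig_pow_comm[OF assms])

lemma E_eig: assumes i: "i < N" shows "\<sigma> i (E i s x) = sc (\<xi> i powi s) (E i s x)"
proof -
  define h where "h j = sc (\<xi> i powi (- (s * int j))) ((\<sigma> i ^^ j) x)" for j
  have nz: "\<xi> i \<noteq> 0" using xi_nz[OF i] .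
  have 1: "\<sigma> i (h j) = sc (\<xi> i powi s) (h (Suc j))" for j
  proof -
    have "\<xi> i powi (- (s * int j)) = \<xi> i powi s * \<xi> i powi (- (s * int (Suc j)))"
      by (subst power_int_add[symmetric]) (auto simp: nz algebra_simps)
    then show ?thesis using lin_sig[OF i]
      by (simp add: h_def lin_scale V.scale_scale)
  qed
  have hm: "h (m i) = h 0"
  proof -
    have "\<xi> i powi (- (s * int (m i))) = 1" using xi_powi_one[OF i] by simp
    then show ?thesis using sig_m[OF i] by (simp add: h_def)
  qed
  have sh: "(\<Sum>j<m i. h (Suc j)) = (\<Sum>j<m i. h j)"
  proof -
    have "h 0 + (\<Sum>j<m i. h (Suc j)) = (\<Sum>j<m i. h j) + h (m i)"
      by (metis sum.lessThan_Suc sum.lessThan_Suc_shift)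
    then show ?thesis using hm by (simp add: add.commute)
  qed
  have "\<sigma> i (E i s x) = sc (inverse (of_nat (m i))) (\<Sum>j<m i. \<sigma> i (h j))"
    using lin_sig[OF i] by (simp add: E_def h_def[symmetric] lin_scale lin_sum)
  also have "\<dots> = sc (inverse (of_nat (m i))) (sc (\<xi> i powi s) (\<Sum>j<m i. h (Suc j)))"
    by (simp add: 1 V.scale_sum_right)
  also have "\<dots> = sc (\<xi> i powi s) (E i s x)"
    by (simp add: sh E_def h_def[symmetric] V.scale_left_commute)
  finally show ?thesis .
qed

lemma pow_eig: assumes i: "i < N" and x: "\<sigma> i x = sc (\<xi> i powi t) x"
  shows "(\<sigma> i ^^ j) x = sc (\<xi> i powi (t * int j)) x"
proof (induction j)
  case (Suc j)
  have "\<xi> i powi (t * int (Suc j)) = \<xi> i powi (t * int j) * \<xi> i powi t"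
    by (simp only: powi_pow power_Suc2)
  then show ?case using Suc lin_sig[OF i] x
    by (simp add: lin_scale V.scale_scale mult.commute)
qed simp

lemma E_on_eig: assumes i: "i < N" and x: "\<sigma> i x = sc (\<xi> i powi t) x"
  shows "E i s x = (if int (m i) dvd (t - s) then x else 0)"
proof -
  have nz: "\<xi> i \<noteq> 0" using xi_nz[OF i] .
  have t: "sc (\<xi> i powi (- (s * int j))) ((\<sigma> i ^^ j) x) = sc ((\<xi> i powi (t - s)) ^ j) x" for j
  proof -
    have "\<xi> i powi (- (s * int j)) * \<xi> i powi (t * int j) = \<xi> i powi ((t - s) * int j)"
      by (subst power_int_add[symmetric]) (auto simp: nz algebra_simps)
    then show ?thesis by (simp add: pow_eig[OF i x] V.scale_scale powi_pow)
  qed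
  have "E i s x = sc (inverse (of_nat (m i))) (sc (\<Sum>j<m i. (\<xi> i powi (t - s)) ^ j) x)"
    by (simp add: E_def t V.scale_sum_left)
  also have "\<dots> = (if int (m i) dvd (t - s) then x else 0)"
    using m_pos[OF i] by (simp add: geo[OF i] V.scale_scale)
  finally show ?thesis .
qed

lemma E_sum: assumes i: "i < N" shows "(\<Sum>s\<in>{0..<int (m i)}. E i s x) = x"
proof -
  have nz: "\<xi> i \<noteq> 0" using xi_nz[OF i] .
  have ims: "{0..<int (m i)} = int ` {..<m i}"
    by (auto simp: image_iff) (metis atLeastLessThan_iff lessThan_iff nonneg_int_cases of_nat_less_iff)
  have inner: "(\<Sum>s<m i. \<xi> i powi (- (int s * int j))) = (if j = 0 then of_nat (m i) else 0)"
    if j: "j < m i" for j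
  proof -
    have "(\<Sum>s<m i. \<xi> i powi (- (int s * int j))) = (\<Sum>s<m i. (\<xi> i powi (- int j)) ^ s)"
      by (intro sum.cong refl) (metis mult.commute mult_minus_left powi_pow)
    also have "\<dots> = (if int (m i) dvd (- int j) then of_nat (m i) else 0)" by (rule geo[OF i])
    also have "(int (m i) dvd (- int j)) \<longleftrightarrow> j = 0"
      using j by (auto simp: of_nat_dvd_iff dvd_minus_iff dest: nat_dvd_not_less)
    finally show ?thesis .
  qed
  have "(\<Sum>s\<in>{0..<int (m i)}. E i s x) = (\<Sum>s<m i. E i (int s) x)"
    by (simp add: ims sum.reindex)
  also have "\<dots> = sc (inverse (of_nat (m i)))
      (\<Sum>j<m i. \<Sum>s<m i. sc (\<xi> i powi (- (int s * int j))) ((\<sigma> i ^^ j) x))"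
    unfolding E_def V.scale_sum_right[symmetric] by (subst sum.swap) (rule refl)
  also have "\<dots> = sc (inverse (of_nat (m i))) (\<Sum>j<m i. sc (if j = 0 then of_nat (m i) else 0) ((\<sigma> i ^^ j) x))"
    by (simp add: V.scale_sum_left[symmetric] inner)
  also have "\<dots> = x"
    using m_pos[OF i] by (simp add: if_distrib[of "\<lambda>c. sc c _"] V.scale_scale sum.delta' cong: if_cong)
  finally show ?thesis .
qed

end


context ml begin

abbreviation gc :: "(nat \<Rightarrow> int) \<Rightarrow> 'v set" where "gc c \<equiv> g_cls sc N \<sigma> \<xi> c"

lemma gc_iff: "x \<in> gc c \<longleftrightarrow> (\<forall>i<N. \<sigma> i x = sc (\<xi> i powi c i) x)"
  by (simp add: g_cls_def)

lemma gc_zero: "0 \<in> gc c" by (simp add: gc_iff lin_zero lin_sig)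
lemma gc_add: "x \<in> gc c \<Longrightarrow> y \<in> gc c \<Longrightarrow> x + y \<in> gc c"
  by (simp add: gc_iff lin_add lin_sig V.scale_right_distrib)
lemma gc_scale: "x \<in> gc c \<Longrightarrow> sc a x \<in> gc c"
  by (simp add: gc_iff lin_scale lin_sig V.scale_left_commute)
lemma gc_sum: "(\<And>j. j \<in> S \<Longrightarrow> f j \<in> gc c) \<Longrightarrow> (\<Sum>j\<in>S. f j) \<in> gc c"
  by (induction S rule: infinite_finite_induct) (auto simp: gc_zero gc_add)

lemma br_deg: assumes "x \<in> gc c" "y \<in> gc d" shows "br x y \<in> gc (\<lambda>i. c i + d i)"
  unfolding gc_iff
proof (intro allI impI)
  fix i assume i: "i < N"
  have "\<xi> i powi (c i + d i) = \<xi> i powi c i * \<xi> i powi d i"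
    using xi_nz[OF i] by (simp add: power_int_add)
  then show "\<sigma> i (br x y) = sc (\<xi> i powi (c i + d i)) (br x y)"
    using assms i by (simp add: gc_iff sig_br br_props V.scale_scale mult.commute)
qed

lemma cls_apply: "cls N m k i = (if i < N then k i mod int (m i) else 0)"
  by (simp add: cls_def)

lemma cls_eq_iff: "cls N m k = cls N m k' \<longleftrightarrow> (\<forall>i<N. k i mod int (m i) = k' i mod int (m i))"
proof
  assume h: "cls N m k = cls N m k'"
  show "\<forall>i<N. k i mod int (m i) = k' i mod int (m i)"
  proof (intro allI impI)
    fix i assume "i < N"
    then show "k i mod int (m i) = k' i mod int (m i)" using fun_cong[OF h, of i] by (simp add: cls_def)
  qed
next
  assume "\<forall>i<N. k i mod int (m i) = k' i mod int (m i)"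
  then show "cls N m k = cls N m k'" by (simp add: cls_def fun_eq_iff)
qed

lemma cls_cls[simp]: "cls N m (cls N m k) = cls N m k"
  by (simp add: cls_def fun_eq_iff)

lemma gc_cls: "gc (cls N m c) = gc c"
proof -
  have *: "\<xi> i powi (cls N m c i) = \<xi> i powi c i" if "i < N" for i
    using xi_powi_mod[OF that, of "c i"] that by (simp add: cls_def)
  show ?thesis unfolding g_cls_def
  proof (intro Collect_cong iffI allI impI)
    fix x i assume "\<forall>i<N. \<sigma> i x = sc (\<xi> i powi cls N m c i) x" "i < N"
    then show "\<sigma> i x = sc (\<xi> i powi c i) x" using * by simp
  next
    fix x i assume "\<forall>i<N. \<sigma> i x = sc (\<xi> i powi c i) x" "i < N"
    then show "\<sigma> i x = sc (\<xi> i powi cls N m c i) x" using * by simp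
  qed
qed

definition Gn :: "nat \<Rightarrow> (nat \<Rightarrow> int) set" where
  "Gn n = {c. (\<forall>i<n. 0 \<le> c i \<and> c i < int (m i)) \<and> (\<forall>i. n \<le> i \<longrightarrow> c i = 0)}"

abbreviation "Gset \<equiv> Gn N"

lemma G_cls_iff: "c \<in> Gset \<longleftrightarrow> cls N m c = c"
proof
  assume "c \<in> Gset" then show "cls N m c = c"
    by (auto simp: Gn_def cls_def fun_eq_iff)
next
  assume h: "cls N m c = c"
  show "c \<in> Gset" unfolding Gn_def
  proof (safe)
    fix i assume i: "i < N"
    have "c i = c i mod int (m i)" using h by (metis cls_apply i)
    then show "0 \<le> c i" "c i < int (m i)" using m_pos[OF i]
      by (metis of_nat_0_less_iff pos_mod_sign pos_mod_bound)+
  next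
    fix i assume "N \<le> i" then show "c i = 0" using h by (metis cls_apply not_le)
  qed
qed

lemma cls_in_G: "cls N m k \<in> Gset" by (simp add: G_cls_iff)

lemma Gn_Suc: "Gn (Suc n) = (\<lambda>(c, s). c(n := s)) ` (Gn n \<times> {0..<int (m n)})"
proof (intro set_eqI iffI)
  fix c assume c: "c \<in> Gn (Suc n)"
  then have "c(n := 0) \<in> Gn n" "c n \<in> {0..<int (m n)}" by (auto simp: Gn_def)
  then show "c \<in> (\<lambda>(c, s). c(n := s)) ` (Gn n \<times> {0..<int (m n)})"
    by (intro image_eqI[where x="(c(n:=0), c n)"]) auto
qed (auto simp: Gn_def)

lemma Gn_inj: "inj_on (\<lambda>(c, s). c(n := s)) (Gn n \<times> {0..<int (m n)})"
proof (rule inj_onI, clarify)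
  fix c s c' s' assume c: "c \<in> Gn n" and c': "c' \<in> Gn n" and h: "c(n := s) = c'(n := s')"
  have "s = s'" using fun_cong[OF h, of n] by simp
  moreover have "c i = c' i" for i
  proof (cases "i = n")
    case True then show ?thesis using c c' by (simp add: Gn_def)
  next
    case False then show ?thesis using fun_cong[OF h, of i] by simp
  qed
  ultimately show "c = c' \<and> s = s'" by auto
qed

lemma finite_Gn: "finite (Gn n)"
proof (induction n)
  case 0
  have "Gn 0 = {\<lambda>_. 0}" by (auto simp: Gn_def)
  then show ?case by simp
next
  case (Suc n) then show ?case by (simp add: Gn_Suc)
qed

primrec Pn :: "nat \<Rightarrow> (nat \<Rightarrow> int) \<Rightarrow> 'v \<Rightarrow> 'v" where
  "Pn 0 c x = x"
| "Pn (Suc n) c x = E n (c n) (Pn n c x)"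

abbreviation P :: "(nat \<Rightarrow> int) \<Rightarrow> 'v \<Rightarrow> 'v" where "P c \<equiv> Pn N c"

lemma lin_Pn: "n \<le> N \<Longrightarrow> lin (Pn n c)"
proof (induction n)
  case 0 then show ?case by (simp add: lin_def)
next
  case (Suc n)
  have "Pn (Suc n) c = E n (c n) \<circ> Pn n c" by (simp add: fun_eq_iff)
  then show ?case using Suc lin_E[of n "c n"] lin_comp[of "E n (c n)" "Pn n c"] by (simp add: comp_def)
qed

lemma lin_P: "lin (P c)" by (simp add: lin_Pn)

lemma Pn_cong: "(\<And>i. i < n \<Longrightarrow> c i = c' i) \<Longrightarrow> Pn n c x = Pn n c' x"
  by (induction n) auto

lemma Pn_eig: "n \<le> N \<Longrightarrow> i < n \<Longrightarrow> \<sigma> i (Pn n c x) = sc (\<xi> i powi c i) (Pn n c x)"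
proof (induction n)
  case (Suc n)
  show ?case
  proof (cases "i < n")
    case True
    then show ?thesis using Suc E_comm[of n i] lin_E[of n]
      by (simp add: lin_scale)
  next
    case False
    then have "i = n" using Suc by simp
    then show ?thesis using Suc E_eig by simp
  qed
qed simp

lemma P_in: "P c x \<in> gc c" by (simp add: gc_iff Pn_eig)

lemma Pn_on: assumes x: "x \<in> gc c'"
  shows "n \<le> N \<Longrightarrow> Pn n c x = (if \<forall>i<n. int (m i) dvd (c' i - c i) then x else 0)"
proof (induction n)
  case (Suc n)
  then have n: "n < N" by simp
  have sx: "\<sigma> n x = sc (\<xi> n powi c' n) x" using x n by (simp add: gc_iff)
  have "(\<forall>i<Suc n. int (m i) dvd (c' i - c i)) \<longleftrightarrow>
        (\<forall>i<n. int (m i) dvd (c' i - c i)) \<and> int (m n) dvd (c' n - c n)"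
    by (auto simp: less_Suc_eq)
  then show ?case using Suc E_on_eig[OF n sx, of "c n"] lin_zero[OF lin_E[OF n]] by auto
qed simp

lemma P_on: assumes x: "x \<in> gc c'" and c: "c \<in> Gset"
  shows "P c x = (if cls N m c' = c then x else 0)"
proof -
  have "(\<forall>i<N. int (m i) dvd (c' i - c i)) \<longleftrightarrow> cls N m c' = cls N m c"
    unfolding cls_eq_iff by (simp add: mod_eq_dvd_iff)
  then show ?thesis using Pn_on[OF x order_refl] c G_cls_iff by auto
qed

lemma P_id: "x \<in> gc c \<Longrightarrow> P (cls N m c) x = x"
  using P_on cls_in_G by simp

lemma Pn_upd[simp]: "Pn n (c(n := s)) x = Pn n c x"
  by (rule Pn_cong) simp

lemma Pn_sum: "n \<le> N \<Longrightarrow> (\<Sum>c\<in>Gn n. Pn n c x) = x"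
proof (induction n)
  case 0
  have "Gn 0 = {\<lambda>_. 0}" by (auto simp: Gn_def)
  then show ?case by simp
next
  case (Suc n)
  then have n: "n < N" by simp
  have "(\<Sum>c\<in>Gn (Suc n). Pn (Suc n) c x) =
        (\<Sum>cs\<in>Gn n \<times> {0..<int (m n)}. Pn (Suc n) ((fst cs)(n := snd cs)) x)"
    unfolding Gn_Suc by (subst sum.reindex[OF Gn_inj]) (simp add: case_prod_beta)
  also have "\<dots> = (\<Sum>cs\<in>Gn n \<times> {0..<int (m n)}. E n (snd cs) (Pn n (fst cs) x))"
    by simp
  also have "\<dots> = (\<Sum>c\<in>Gn n. \<Sum>s\<in>{0..<int (m n)}. E n s (Pn n c x))"
    by (simp add: sum.cartesian_product case_prod_beta)
  also have "\<dots> = (\<Sum>c\<in>Gn n. Pn n c x)" by (simp add: E_sum[OF n])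
  finally show ?case using Suc by simp
qed

lemma P_sum: "(\<Sum>c\<in>Gset. P c x) = x" by (simp add: Pn_sum)

lemma finite_G: "finite Gset" by (rule finite_Gn)

end


context ml begin

definition peval :: "'f poly \<Rightarrow> ('v \<Rightarrow> 'v) \<Rightarrow> 'v \<Rightarrow> 'v" where
  "peval p \<theta> w = (\<Sum>i\<le>degree p. sc (coeff p i) ((\<theta> ^^ i) w))"

lemma peval_bound: assumes "degree p \<le> n"
  shows "peval p \<theta> w = (\<Sum>i\<le>n. sc (coeff p i) ((\<theta> ^^ i) w))"
  unfolding peval_def
  by (rule sum.mono_neutral_left) (use assms in \<open>auto simp: coeff_eq_0\<close>)

lemma peval_lin: assumes th: "lin \<theta>"
  shows "peval (pCons 0 q - smult l q) \<theta> w = \<theta> (peval q \<theta> w) - sc l (peval q \<theta> w)"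
proof -
  define n where "n = degree q"
  have deg: "degree (pCons 0 q - smult l q) \<le> Suc n"
    by (metis degree_diff_le degree_pCons_le degree_smult_le le_Suc_eq n_def)
  have "peval (pCons 0 q - smult l q) \<theta> w =
     (\<Sum>i\<le>Suc n. sc (coeff (pCons 0 q) i) ((\<theta> ^^ i) w)) - (\<Sum>i\<le>Suc n. sc (l * coeff q i) ((\<theta> ^^ i) w))"
    unfolding peval_bound[OF deg] by (simp add: V.scale_left_diff_distrib sum_subtractf del: sum.atMost_Suc)
  also have "(\<Sum>i\<le>Suc n. sc (l * coeff q i) ((\<theta> ^^ i) w)) = sc l (peval q \<theta> w)"
  proof -
    have "peval q \<theta> w = (\<Sum>i\<le>Suc n. sc (coeff q i) ((\<theta> ^^ i) w))"
      by (rule peval_bound) (simp add: n_def)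
    then show ?thesis
      by (simp add: V.scale_sum_right V.scale_scale del: sum.atMost_Suc)
  qed
  also have "(\<Sum>i\<le>Suc n. sc (coeff (pCons 0 q) i) ((\<theta> ^^ i) w)) = \<theta> (peval q \<theta> w)"
    unfolding sum.atMost_Suc_shift
    by (simp add: peval_def n_def lin_sum[OF th] lin_scale[OF th] del: sum.atMost_Suc)
  finally show ?thesis by simp
qed

lemma eig_from_poly:
  assumes th: "lin \<theta>"
  shows "p \<noteq> 0 \<Longrightarrow> w \<noteq> 0 \<Longrightarrow> peval p \<theta> w = 0 \<Longrightarrow> \<exists>l u. u \<noteq> 0 \<and> \<theta> u = sc l u"
proof (induction "degree p" arbitrary: p w rule: less_induct)
  case less
  show ?case
  proof (cases "degree p = 0")
    case True
    then have "peval p \<theta> w = sc (coeff p 0) w" by (simp add: peval_def)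
    moreover have "coeff p 0 \<noteq> 0" using True less.prems(1) by (metis degree_0_id pCons_0_0)
    ultimately show ?thesis using less.prems by simp
  next
    case False
    obtain x where "poly p x = 0" using acf False by (auto simp: alg_closed_field_def)
    then obtain q where q: "p = [:-x, 1:] * q" by (metis poly_eq_0_iff_dvd dvdE)
    have qnz: "q \<noteq> 0" using q less.prems by auto
    have "degree ([:-x, 1:] * q) = degree [:-x, 1:] + degree q"
      by (rule degree_mult_eq) (simp_all add: qnz)
    then have "degree p = 1 + degree q" unfolding q by simp
    then have dq: "degree q < degree p" by simp
    show ?thesis
    proof (cases "peval q \<theta> w = 0")
      case True
      then show ?thesis using less.hyps[OF dq qnz less.prems(2)] by blast
    next
      case False
      have "\<theta> (peval q \<theta> w) - sc x (peval q \<theta> w) = 0"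
        using less.prems(3) q peval_lin[OF th, of q x w] by simp
      then show ?thesis using False by (intro exI[of _ x] exI[of _ "peval q \<theta> w"]) simp
    qed
  qed
qed

lemma peval_diff: "peval (p - q) \<theta> w = peval p \<theta> w - peval q \<theta> w"
proof -
  define n where "n = max (degree p) (degree q)"
  have "degree (p - q) \<le> n" "degree p \<le> n" "degree q \<le> n"
    by (auto simp: n_def degree_diff_le_max)
  then show ?thesis
    by (simp add: peval_bound[of _ n] V.scale_left_diff_distrib sum_subtractf)
qed

lemma peval_monom: "peval (monom 1 j) \<theta> w = (\<theta> ^^ j) w"
proof -
  have "peval (monom 1 j) \<theta> w = (\<Sum>i\<le>j. if i = j then (\<theta> ^^ i) w else 0)"
    unfolding peval_def by (intro sum.cong) (auto simp: coeff_monom degree_monom_eq)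
  then show ?thesis by simp
qed

lemma eigen_exists: fixes w :: 'v assumes th: "lin \<theta>" and w: "w \<noteq> 0"
  shows "\<exists>l u. u \<noteq> 0 \<and> \<theta> u = sc l u"
proof -
  define n where "n = V.dim (UNIV :: 'v set)"
  define f where "f i = (\<theta> ^^ i) w" for i
  have "\<exists>p. p \<noteq> 0 \<and> peval p \<theta> w = 0"
  proof (cases "inj_on f {..n}")
    case False
    then obtain i j where ij: "i \<le> n" "j \<le> n" "i \<noteq> j" "f i = f j"
      by (auto simp: inj_on_def)
    have "monom (1::'f) i \<noteq> monom 1 j" using ij(3) by (metis monom_eq_iff' one_neq_zero)
    then show ?thesis using ij
      by (intro exI[of _ "monom 1 i - monom 1 j"]) (simp add: peval_diff peval_monom f_def)
  next
    case True
    let ?S = "f ` {..n}"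
    have "card ?S = Suc n" using True by (simp add: card_image)
    then have "V.dependent ?S"
      using V.independent_card_le_dim[of ?S UNIV] n_def by auto
    then obtain u where u: "\<exists>v\<in>?S. u v \<noteq> 0" "(\<Sum>v\<in>?S. sc (u v) v) = 0"
      using V.dependent_finite[of ?S] by auto
    define p where "p = Poly (map (\<lambda>i. u (f i)) [0..<Suc n])"
    have cp: "coeff p i = (if i \<le> n then u (f i) else 0)" for i
      by (simp add: p_def nth_default_def del: upt_Suc)
    have dp: "degree p \<le> n" by (rule degree_le) (simp add: cp)
    have "peval p \<theta> w = (\<Sum>i\<le>n. sc (u (f i)) (f i))"
      by (simp add: peval_bound[OF dp] cp f_def)
    also have "\<dots> = (\<Sum>v\<in>?S. sc (u v) v)" by (simp add: sum.reindex[OF True])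
    finally have "peval p \<theta> w = 0" using u by simp
    moreover have "p \<noteq> 0" using u(1) cp by (metis atMost_iff coeff_0 imageE)
    ultimately show ?thesis by blast
  qed
  then show ?thesis using eig_from_poly[OF th _ w] by blast
qed

end


context ml begin

definition alg :: "('v \<Rightarrow> 'v) set \<Rightarrow> bool" where
  "alg Q \<longleftrightarrow> (\<forall>\<phi>\<in>Q. lin \<phi>) \<and> (\<forall>\<phi>\<in>Q. \<forall>\<psi>\<in>Q. (\<lambda>x. \<phi> x + \<psi> x) \<in> Q) \<and>
     (\<forall>\<phi>\<in>Q. \<forall>r. (\<lambda>x. sc r (\<phi> x)) \<in> Q) \<and> (\<forall>\<phi>\<in>Q. \<forall>\<psi>\<in>Q. \<phi> \<circ> \<psi> \<in> Q) \<and> (\<forall>x. br x \<in> Q)"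

context
  fixes Q assumes Q: "alg Q"
begin

lemma Q_lin: "\<phi> \<in> Q \<Longrightarrow> lin \<phi>" using Q by (simp add: alg_def)
lemma Q_add: "\<phi> \<in> Q \<Longrightarrow> \<psi> \<in> Q \<Longrightarrow> (\<lambda>x. \<phi> x + \<psi> x) \<in> Q" using Q by (simp add: alg_def)
lemma Q_scale: "\<phi> \<in> Q \<Longrightarrow> (\<lambda>x. sc r (\<phi> x)) \<in> Q" using Q by (simp add: alg_def)
lemma Q_comp: "\<phi> \<in> Q \<Longrightarrow> \<psi> \<in> Q \<Longrightarrow> (\<lambda>x. \<phi> (\<psi> x)) \<in> Q"
  using Q by (simp add: alg_def comp_def)
lemma Q_br: "br x \<in> Q" using Q by (simp add: alg_def)
lemma Q_zero: "(\<lambda>x. 0) \<in> Q"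
  using Q_scale[OF Q_br, of 0 0] by simp
lemma Q_diff: "\<phi> \<in> Q \<Longrightarrow> \<psi> \<in> Q \<Longrightarrow> (\<lambda>x. \<phi> x - \<psi> x) \<in> Q"
  using Q_add[OF _ Q_scale[of \<psi> "-1"], of \<phi>] by (simp add: V.scale_minus_left)
lemma Q_sum: "finite S \<Longrightarrow> (\<And>j. j \<in> S \<Longrightarrow> f j \<in> Q) \<Longrightarrow> (\<lambda>x. \<Sum>j\<in>S. f j x) \<in> Q"
  by (induction S rule: finite_induct) (auto simp: Q_zero Q_add)

lemma invariant: assumes "V.subspace W" "\<And>\<phi> w. \<phi> \<in> Q \<Longrightarrow> w \<in> W \<Longrightarrow> \<phi> w \<in> W"
  shows "W = {0} \<or> W = UNIV"
  using simple[of W] assms Q_br by (auto simp: lie_ideal_def)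

lemma orbit: assumes v: "v \<noteq> 0" shows "{\<phi> v | \<phi>. \<phi> \<in> Q} = UNIV"
proof -
  let ?O = "\<lambda>v. {\<phi> v | \<phi>. \<phi> \<in> Q}"
  have sub: "V.subspace (?O u)" for u
    unfolding V.subspace_def
  proof (intro conjI allI ballI)
    show "0 \<in> ?O u" by (intro CollectI exI[of _ "\<lambda>x. 0"] conjI) (simp_all add: Q_zero)
  next
    fix x y assume "x \<in> ?O u" "y \<in> ?O u"
    then obtain \<phi> \<psi> where "\<phi> \<in> Q" "\<psi> \<in> Q" "x = \<phi> u" "y = \<psi> u" by blast
    then show "x + y \<in> ?O u"
      by (intro CollectI exI[of _ "\<lambda>x. \<phi> x + \<psi> x"] conjI) (simp_all add: Q_add)
  next
    fix c x assume "x \<in> ?O u"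
    then obtain \<phi> where "\<phi> \<in> Q" "x = \<phi> u" by blast
    then show "sc c x \<in> ?O u"
      by (intro CollectI exI[of _ "\<lambda>x. sc c (\<phi> x)"] conjI) (simp_all add: Q_scale)
  qed
  have inv: "\<phi> \<in> Q \<Longrightarrow> w \<in> ?O u \<Longrightarrow> \<phi> w \<in> ?O u" for \<phi> w u
  proof -
    assume "\<phi> \<in> Q" "w \<in> ?O u"
    then obtain \<psi> where "\<psi> \<in> Q" "w = \<psi> u" by blast
    then show ?thesis using \<open>\<phi> \<in> Q\<close>
      by (intro CollectI exI[of _ "\<lambda>x. \<phi> (\<psi> x)"] conjI) (simp_all add: Q_comp)
  qed
  have "?O v = UNIV"
  proof (rule ccontr)
    assume ne: "?O v \<noteq> UNIV"
    have "?O v = {0} \<or> ?O v = UNIV" by (rule invariant[OF sub]) (rule inv)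
    then have O0: "?O v = {0}" using ne by blast
    let ?K = "{u. \<forall>\<phi>\<in>Q. \<phi> u = 0}"
    have "V.subspace ?K" unfolding V.subspace_def
      using Q_lin by (auto simp: lin_zero lin_add lin_scale)
    moreover have "\<phi> \<in> Q \<Longrightarrow> w \<in> ?K \<Longrightarrow> \<phi> w \<in> ?K" for \<phi> w
    proof -
      assume a: "\<phi> \<in> Q" "w \<in> ?K"
      have "\<psi> (\<phi> w) = 0" if "\<psi> \<in> Q" for \<psi>
        using bspec[OF a(2)[simplified] Q_comp[OF that a(1)]] by simp
      then show ?thesis by simp
    qed
    ultimately have "?K = {0} \<or> ?K = UNIV" by (rule invariant)
    moreover have "v \<in> ?K"
    proof -
      have "\<phi> v \<in> ?O v" if "\<phi> \<in> Q" for \<phi> using that by blast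
      then show ?thesis using O0 by simp
    qed
    ultimately have KU: "?K = UNIV" using v by blast
    obtain x y where "br x y \<noteq> 0" using nontriv by blast
    moreover have "y \<in> ?K" using KU by simp
    ultimately show False using Q_br[of x] by simp
  qed
  then show ?thesis .
qed

lemma density: "finite S \<Longrightarrow> v \<notin> V.span S \<Longrightarrow> \<exists>\<phi>\<in>Q. (\<forall>s\<in>S. \<phi> s = 0) \<and> \<phi> v \<noteq> 0"
proof (induction S arbitrary: v rule: finite_induct)
  case empty
  then have "v \<noteq> 0" by simp
  then have "v \<in> {\<phi> v | \<phi>. \<phi> \<in> Q}" using orbit by blast
  then obtain \<phi> where "\<phi> \<in> Q" "\<phi> v = v" by auto
  then show ?case using \<open>v \<noteq> 0\<close> by (intro bexI[of _ \<phi>]) auto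
next
  case (insert u S)
  define Ann where "Ann = {\<phi>\<in>Q. \<forall>s\<in>S. \<phi> s = 0}"
  have Ann_add: "\<phi> \<in> Ann \<Longrightarrow> \<psi> \<in> Ann \<Longrightarrow> (\<lambda>x. \<phi> x + \<psi> x) \<in> Ann" for \<phi> \<psi>
    by (auto simp: Ann_def Q_add)
  have Ann_scale: "\<phi> \<in> Ann \<Longrightarrow> (\<lambda>x. sc r (\<phi> x)) \<in> Ann" for \<phi> r
    by (auto simp: Ann_def Q_scale)
  have Ann_diff: "\<phi> \<in> Ann \<Longrightarrow> \<psi> \<in> Ann \<Longrightarrow> (\<lambda>x. \<phi> x - \<psi> x) \<in> Ann" for \<phi> \<psi>
    by (auto simp: Ann_def Q_diff)
  have Ann_comp: "\<psi> \<in> Q \<Longrightarrow> \<phi> \<in> Ann \<Longrightarrow> (\<lambda>x. \<psi> (\<phi> x)) \<in> Ann" for \<phi> \<psi>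
    by (auto simp: Ann_def Q_comp lin_zero Q_lin)
  have Ann_zero: "(\<lambda>x. 0) \<in> Ann" by (auto simp: Ann_def Q_zero)
  let ?M = "{\<phi> u | \<phi>. \<phi> \<in> Ann}"
  have "V.subspace ?M"
    unfolding V.subspace_def
  proof (intro conjI allI ballI)
    show "0 \<in> ?M" by (intro CollectI exI[of _ "\<lambda>x. 0"] conjI) (simp_all add: Ann_zero)
  next
    fix x y assume "x \<in> ?M" "y \<in> ?M"
    then obtain \<phi> \<psi> where "\<phi> \<in> Ann" "\<psi> \<in> Ann" "x = \<phi> u" "y = \<psi> u" by blast
    then show "x + y \<in> ?M"
      by (intro CollectI exI[of _ "\<lambda>x. \<phi> x + \<psi> x"] conjI) (simp_all add: Ann_add)
  next
    fix c x assume "x \<in> ?M"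
    then obtain \<phi> where "\<phi> \<in> Ann" "x = \<phi> u" by blast
    then show "sc c x \<in> ?M"
      by (intro CollectI exI[of _ "\<lambda>x. sc c (\<phi> x)"] conjI) (simp_all add: Ann_scale)
  qed
  moreover have "\<phi> \<in> Q \<Longrightarrow> w \<in> ?M \<Longrightarrow> \<phi> w \<in> ?M" for \<phi> w
  proof -
    assume "\<phi> \<in> Q" "w \<in> ?M"
    then obtain \<psi> where "\<psi> \<in> Ann" "w = \<psi> u" by blast
    then show ?thesis using \<open>\<phi> \<in> Q\<close>
      by (intro CollectI exI[of _ "\<lambda>x. \<phi> (\<psi> x)"] conjI) (simp_all add: Ann_comp)
  qed
  ultimately have M: "?M = {0} \<or> ?M = UNIV" by (rule invariant)
  show ?case
  proof (cases "?M = {0}")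
    case True
    have "u \<in> V.span S"
    proof (rule ccontr)
      assume "u \<notin> V.span S"
      then obtain \<phi> where "\<phi> \<in> Ann" "\<phi> u \<noteq> 0" using insert.IH by (auto simp: Ann_def)
      then have "\<phi> u \<in> ?M" by blast
      then show False using True \<open>\<phi> u \<noteq> 0\<close> by simp
    qed
    then have "v \<notin> V.span S" using insert.prems by (simp add: V.span_redundant)
    then obtain \<phi> where "\<phi> \<in> Ann" "\<phi> v \<noteq> 0" using insert.IH by (auto simp: Ann_def)
    moreover have "\<phi> u \<in> ?M" using \<open>\<phi> \<in> Ann\<close> by blast
    then have "\<phi> u = 0" using True by simp
    ultimately show ?thesis by (auto simp: Ann_def)
  next
    case False
    then have MU: "?M = UNIV" using M by blast
    show ?thesis
    proof (rule ccontr)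
      assume nex: "\<not> ?thesis"
      have H: "\<phi> \<in> Ann \<Longrightarrow> \<phi> u = 0 \<Longrightarrow> \<phi> v = 0" for \<phi>
        using nex by (auto simp: Ann_def)
      have ex: "\<exists>\<phi>. \<phi> \<in> Ann \<and> \<phi> u = w" for w
      proof -
        have "w \<in> ?M" using MU by simp
        then show ?thesis by auto
      qed
      define \<theta> where "\<theta> w = (SOME \<phi>. \<phi> \<in> Ann \<and> \<phi> u = w) v" for w
      have th: "\<theta> (\<phi> u) = \<phi> v" if "\<phi> \<in> Ann" for \<phi>
      proof -
        define \<phi>' where "\<phi>' = (SOME \<phi>'. \<phi>' \<in> Ann \<and> \<phi>' u = \<phi> u)"
        have "\<phi>' \<in> Ann \<and> \<phi>' u = \<phi> u" unfolding \<phi>'_def by (rule someI[of _ \<phi>]) (use that in simp)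
        then have "(\<lambda>x. \<phi>' x - \<phi> x) v = 0" using H[OF Ann_diff[OF _ that]] by auto
        then show ?thesis by (simp add: \<theta>_def \<phi>'_def)
      qed
      have lth: "lin \<theta>" unfolding lin_def
      proof (intro conjI allI)
        fix x y
        obtain \<phi> where \<phi>: "\<phi> \<in> Ann" "\<phi> u = x" using ex by blast
        obtain \<psi> where \<psi>: "\<psi> \<in> Ann" "\<psi> u = y" using ex by blast
        have "\<theta> (x + y) = \<theta> ((\<lambda>x. \<phi> x + \<psi> x) u)" using \<phi> \<psi> by simp
        also have "\<dots> = \<phi> v + \<psi> v" using th[OF Ann_add[OF \<phi>(1) \<psi>(1)]] by simp
        finally show "\<theta> (x + y) = \<theta> x + \<theta> y" using th[OF \<phi>(1)] th[OF \<psi>(1)] \<phi> \<psi> by simp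
      next
        fix a x
        obtain \<phi> where \<phi>: "\<phi> \<in> Ann" "\<phi> u = x" using ex by blast
        have "\<theta> (sc a x) = \<theta> ((\<lambda>x. sc a (\<phi> x)) u)" using \<phi> by simp
        also have "\<dots> = sc a (\<phi> v)" using th[OF Ann_scale[OF \<phi>(1)]] by simp
        finally show "\<theta> (sc a x) = sc a (\<theta> x)" using th[OF \<phi>(1)] \<phi> by simp
      qed
      have thc: "\<psi> \<in> Q \<Longrightarrow> \<theta> (\<psi> w) = \<psi> (\<theta> w)" for \<psi> w
      proof -
        assume "\<psi> \<in> Q"
        obtain \<phi> where \<phi>: "\<phi> \<in> Ann" "\<phi> u = w" using ex by blast
        have "\<theta> (\<psi> w) = \<theta> ((\<lambda>x. \<psi> (\<phi> x)) u)" using \<phi> by simp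
        also have "\<dots> = \<psi> (\<phi> v)" using th[OF Ann_comp[OF \<open>\<psi> \<in> Q\<close> \<phi>(1)]] by simp
        finally show ?thesis using th[OF \<phi>(1)] \<phi> by simp
      qed
      obtain x0 y0 where "br x0 y0 \<noteq> 0" using nontriv by blast
      then obtain l z where z: "z \<noteq> 0" "\<theta> z = sc l z" using eigen_exists[OF lth, of "br x0 y0"] by blast
      let ?K = "{w. \<theta> w = sc l w}"
      have "V.subspace ?K" unfolding V.subspace_def
        using lth by (auto simp: lin_zero lin_add lin_scale V.scale_right_distrib V.scale_left_commute)
      moreover have "\<phi> \<in> Q \<Longrightarrow> w \<in> ?K \<Longrightarrow> \<phi> w \<in> ?K" for \<phi> w
        using thc Q_lin by (simp add: lin_scale)
      ultimately have "?K = {0} \<or> ?K = UNIV" by (rule invariant)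
      then have KU: "?K = UNIV" using z by auto
      have "v - sc l u \<in> V.span S"
      proof (rule ccontr)
        assume "v - sc l u \<notin> V.span S"
        then obtain \<phi> where \<phi>: "\<phi> \<in> Ann" "\<phi> (v - sc l u) \<noteq> 0"
          using insert.IH by (auto simp: Ann_def)
        have "\<phi> u \<in> ?K" using KU by simp
        then have "\<phi> v = sc l (\<phi> u)" using th[OF \<phi>(1)] by simp
        then show False using \<phi> Q_lin[of \<phi>] by (simp add: Ann_def lin_diff lin_scale)
      qed
      then show False using insert.prems by (simp add: V.span_breakdown_eq)
    qed
  qed
qed

lemma all_in_Q: assumes L: "lin L" shows "L \<in> Q"
proof -
  have "\<forall>b\<in>Bs. \<exists>\<phi>\<in>Q. (\<forall>s\<in>Bs - {b}. \<phi> s = 0) \<and> \<phi> b \<noteq> 0"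
  proof
    fix b assume b: "b \<in> Bs"
    have "b \<notin> V.span (Bs - {b})" using V.independent_Basis b by (auto simp: V.dependent_def)
    then show "\<exists>\<phi>\<in>Q. (\<forall>s\<in>Bs - {b}. \<phi> s = 0) \<and> \<phi> b \<noteq> 0"
      using density[of "Bs - {b}" b] V.finite_Basis by auto
  qed
  then obtain \<phi> where \<phi>: "\<And>b. b \<in> Bs \<Longrightarrow> \<phi> b \<in> Q \<and> (\<forall>s\<in>Bs - {b}. \<phi> b s = 0) \<and> \<phi> b b \<noteq> 0"
    by metis
  have "\<forall>b\<in>Bs. \<exists>\<psi>\<in>Q. \<psi> (\<phi> b b) = L b"
  proof
    fix b assume "b \<in> Bs"
    then have "L b \<in> {\<psi> (\<phi> b b) | \<psi>. \<psi> \<in> Q}" using orbit \<phi> by blast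
    then show "\<exists>\<psi>\<in>Q. \<psi> (\<phi> b b) = L b" by auto
  qed
  then obtain \<psi> where \<psi>: "\<And>b. b \<in> Bs \<Longrightarrow> \<psi> b \<in> Q \<and> \<psi> b (\<phi> b b) = L b" by metis
  define F where "F x = (\<Sum>b\<in>Bs. \<psi> b (\<phi> b x))" for x
  have FQ: "F \<in> Q" unfolding F_def[abs_def]
    by (rule Q_sum[OF V.finite_Basis]) (use \<phi> \<psi> Q_comp in auto)
  have Fb: "F b' = L b'" if b': "b' \<in> Bs" for b'
  proof -
    have "F b' = (\<Sum>b\<in>Bs. if b = b' then L b' else 0)"
      unfolding F_def
    proof (intro sum.cong refl)
      fix b assume b: "b \<in> Bs"
      show "\<psi> b (\<phi> b b') = (if b = b' then L b' else 0)"
        using \<phi>[OF b] \<psi>[OF b] b' Q_lin[of "\<psi> b"] by (auto simp: lin_zero)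
    qed
    also have "\<dots> = L b'" using b' V.finite_Basis by (subst sum.delta) auto
    finally show ?thesis .
  qed
  have "F x = L x" for x
  proof -
    have rep: "x = (\<Sum>b\<in>Bs. sc (V.representation Bs x b) b)"
      using V.sum_representation_eq[of Bs x Bs] V.independent_Basis V.span_Basis V.finite_Basis by simp
    have "F x = (\<Sum>b\<in>Bs. sc (V.representation Bs x b) (F b))"
      by (subst rep) (simp add: lin_sum lin_scale Q_lin[OF FQ])
    also have "\<dots> = (\<Sum>b\<in>Bs. sc (V.representation Bs x b) (L b))" by (simp add: Fb)
    also have "\<dots> = L x" by (subst (2) rep) (simp add: lin_sum lin_scale L)
    finally show ?thesis .
  qed
  then have "F = L" by auto
  then show ?thesis using FQ by simp
qed

end
end



context ml begin

lemma br_sum_left: "br (\<Sum>c\<in>S. f c) y = (\<Sum>c\<in>S. br (f c) y)"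
  by (induction S rule: infinite_finite_induct) (auto simp: br_props)

lemma cls_eq_dvd: "cls N m x = cls N m y \<longleftrightarrow> (\<forall>i<N. int (m i) dvd (x i - y i))"
  by (simp add: cls_eq_iff mod_eq_dvd_iff)

lemma G_valid: "c \<in> Gset \<Longrightarrow> valid_exp N c" by (simp add: Gn_def valid_exp_def)

lemma cls_shift_iff: assumes c: "c \<in> Gset"
  shows "cls N m (\<lambda>i. x i - b i) = cls N m (\<lambda>i. c i - b i) \<longleftrightarrow> cls N m x = c"
proof -
  have "cls N m x = c \<longleftrightarrow> cls N m x = cls N m c" using c G_cls_iff by simp
  then show ?thesis by (simp add: cls_eq_dvd)
qed

end

locale mlI = ml sc br N m \<sigma> \<xi> Bs
  for sc :: "'f::field_char_0 \<Rightarrow> 'v::ab_group_add \<Rightarrow> 'v" and br N m \<sigma> \<xi> Bs +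
  fixes B :: "(nat \<Rightarrow> int) \<Rightarrow> 'v set" and I :: "((nat \<Rightarrow> int) \<Rightarrow> 'v) set"
  assumes Bas: "\<And>k. valid_exp N k \<Longrightarrow>
           \<not> module.dependent sc (B (cls N m k)) \<and>
           module.span sc (B (cls N m k)) = g_cls sc N \<sigma> \<xi> (cls N m k)"
    and idl: "multiloop_ideal sc br N \<sigma> \<xi> I"
begin

abbreviation "L \<equiv> multiloop sc N \<sigma> \<xi>"

lemma B_indep: "c \<in> Gset \<Longrightarrow> V.independent (B c)"
  using Bas[OF G_valid, of c] G_cls_iff by simp
lemma B_span: "c \<in> Gset \<Longrightarrow> V.span (B c) = gc c"
  using Bas[OF G_valid, of c] G_cls_iff by simp
lemma B_finite: "c \<in> Gset \<Longrightarrow> finite (B c)"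
  using B_indep V.finiteI_independent by blast

lemma I_L: "I \<subseteq> L" using idl by (simp add: multiloop_ideal_def)
lemma I_zero: "(\<lambda>_. 0) \<in> I" using idl by (simp add: multiloop_ideal_def)
lemma I_add: "X \<in> I \<Longrightarrow> Y \<in> I \<Longrightarrow> (\<lambda>k. X k + Y k) \<in> I" using idl by (simp add: multiloop_ideal_def)
lemma I_scale: "X \<in> I \<Longrightarrow> (\<lambda>k. sc a (X k)) \<in> I" using idl by (simp add: multiloop_ideal_def)
lemma I_br: "X \<in> L \<Longrightarrow> Y \<in> I \<Longrightarrow> gR_bracket br X Y \<in> I" using idl by (simp add: multiloop_ideal_def)
lemma I_sum: "finite S \<Longrightarrow> (\<And>j. j \<in> S \<Longrightarrow> f j \<in> I) \<Longrightarrow> (\<lambda>k. \<Sum>j\<in>S. f j k) \<in> I"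
  by (induction S rule: finite_induct) (auto simp: I_zero I_add)

lemma L_gc: "X \<in> L \<Longrightarrow> X k \<in> gc k" by (simp add: multiloop_def)
lemma L_valid: "X \<in> L \<Longrightarrow> \<not> valid_exp N k \<Longrightarrow> X k = 0"
  by (auto simp: multiloop_def gR_def)
lemma L_fin: "X \<in> L \<Longrightarrow> finite {k. X k \<noteq> 0}"
  by (auto simp: multiloop_def gR_def)

definition T :: "('v \<Rightarrow> 'v) \<Rightarrow> (nat \<Rightarrow> int) \<Rightarrow> ((nat \<Rightarrow> int) \<Rightarrow> 'v) \<Rightarrow> (nat \<Rightarrow> int) \<Rightarrow> 'v" where
  "T \<phi> a Y = (\<lambda>k. P (cls N m k) (\<phi> (Y (\<lambda>i. k i - a i))))"

definition Qs :: "('v \<Rightarrow> 'v) set" where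
  "Qs = {\<phi>. lin \<phi> \<and> (\<forall>a. valid_exp N a \<longrightarrow> (\<forall>Y\<in>I. T \<phi> a Y \<in> I))}"

lemma valid_sub: "valid_exp N a \<Longrightarrow> valid_exp N b \<Longrightarrow> valid_exp N (\<lambda>i. a i - b i)"
  by (simp add: valid_exp_def)
lemma valid_add: "valid_exp N a \<Longrightarrow> valid_exp N b \<Longrightarrow> valid_exp N (\<lambda>i. a i + b i)"
  by (simp add: valid_exp_def)

lemma Q_comp_aux: assumes \<phi>: "lin \<phi>" and \<psi>: "lin \<psi>"
  shows "T (\<phi> \<circ> \<psi>) a Y = (\<lambda>k. \<Sum>e\<in>Gset. T \<phi> (\<lambda>i. a i - e i) (T \<psi> e Y) k)"
proof
  fix k
  define h where "h e = cls N m (\<lambda>i. k i - (a i - e i))" for e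
  have inj: "inj_on h Gset"
  proof (rule inj_onI)
    fix e e' assume e: "e \<in> Gset" and e': "e' \<in> Gset" and eq: "h e = h e'"
    have "cls N m e = cls N m e'"
      using eq unfolding h_def cls_eq_dvd by (simp add: algebra_simps)
    then show "e = e'" using e e' G_cls_iff by simp
  qed
  have img: "h ` Gset = Gset"
    by (rule endo_inj_surj[OF finite_G _ inj]) (auto simp: h_def cls_in_G)
  define z where "z = \<psi> (Y (\<lambda>i. k i - a i))"
  have "(\<Sum>e\<in>Gset. T \<phi> (\<lambda>i. a i - e i) (T \<psi> e Y) k) = P (cls N m k) (\<phi> (\<Sum>e\<in>Gset. P (h e) z))"
    by (simp add: T_def h_def z_def lin_sum[OF \<phi>] lin_sum[OF lin_P] algebra_simps)
  also have "(\<Sum>e\<in>Gset. P (h e) z) = (\<Sum>c\<in>Gset. P c z)"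
    using sum.reindex[OF inj, of "\<lambda>c. P c z"] img by simp
  also have "\<dots> = z" by (rule P_sum)
  finally show "T (\<phi> \<circ> \<psi>) a Y k = (\<Sum>e\<in>Gset. T \<phi> (\<lambda>i. a i - e i) (T \<psi> e Y) k)"
    by (simp add: T_def z_def)
qed

lemma Q_br_aux: "T (br x) a Y = gR_bracket br (\<lambda>b. if b = a then P (cls N m a) x else 0) Y"
  if Y: "Y \<in> I"
proof
  fix k
  define y where "y = Y (\<lambda>i. k i - a i)"
  have y: "y \<in> gc (\<lambda>i. k i - a i)" using L_gc I_L Y by (auto simp: y_def)
  have each: "P (cls N m k) (br (P c x) y) = (if c = cls N m a then br (P c x) y else 0)"
    if c: "c \<in> Gset" for c
  proof -
    have "br (P c x) y \<in> gc (\<lambda>i. c i + (k i - a i))" using br_deg[OF P_in y] .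
    then have "P (cls N m k) (br (P c x) y) =
        (if cls N m (\<lambda>i. c i + (k i - a i)) = cls N m k then br (P c x) y else 0)"
      using P_on cls_in_G by blast
    moreover have "cls N m (\<lambda>i. c i + (k i - a i)) = cls N m k \<longleftrightarrow> cls N m c = cls N m a"
      by (simp add: cls_eq_dvd algebra_simps)
    moreover have "cls N m c = c" using c G_cls_iff by simp
    ultimately show ?thesis by auto
  qed
  have "T (br x) a Y k = P (cls N m k) (br (\<Sum>c\<in>Gset. P c x) y)"
    by (simp add: T_def y_def P_sum)
  also have "\<dots> = (\<Sum>c\<in>Gset. P (cls N m k) (br (P c x) y))"
    by (simp add: lin_sum[OF lin_P] br_sum_left)
  also have "\<dots> = (\<Sum>c\<in>Gset. if c = cls N m a then br (P c x) y else 0)"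
    by (rule sum.cong) (simp_all add: each)
  also have "\<dots> = br (P (cls N m a) x) y" by (subst sum.delta[OF finite_G]) (simp add: cls_in_G)
  also have "\<dots> = gR_bracket br (\<lambda>b. if b = a then P (cls N m a) x else 0) Y k"
  proof (cases "P (cls N m a) x = 0")
    case True
    then have "{b. (if b = a then P (cls N m a) x else 0) \<noteq> 0} = {}" by auto
    then show ?thesis using True by (simp add: gR_bracket_def)
  next
    case False
    then have "{b. (if b = a then P (cls N m a) x else 0) \<noteq> 0} = {a}" by auto
    then show ?thesis by (simp add: gR_bracket_def y_def)
  qed
  finally show "T (br x) a Y k = gR_bracket br (\<lambda>b. if b = a then P (cls N m a) x else 0) Y k" .
qed

lemma alg_Qs: "alg Qs"
  unfolding alg_def
proof (intro conjI ballI allI)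
  fix \<phi> assume "\<phi> \<in> Qs" then show "lin \<phi>" by (simp add: Qs_def)
next
  fix \<phi> \<psi> assume \<phi>: "\<phi> \<in> Qs" and \<psi>: "\<psi> \<in> Qs"
  show "(\<lambda>x. \<phi> x + \<psi> x) \<in> Qs" unfolding Qs_def
  proof (intro CollectI conjI allI impI ballI)
    show "lin (\<lambda>x. \<phi> x + \<psi> x)" using \<phi> \<psi> by (simp add: Qs_def lin_plus)
    fix a Y assume a: "valid_exp N a" and Y: "Y \<in> I"
    have "T (\<lambda>x. \<phi> x + \<psi> x) a Y = (\<lambda>k. T \<phi> a Y k + T \<psi> a Y k)"
      by (simp add: T_def lin_add[OF lin_P])
    then show "T (\<lambda>x. \<phi> x + \<psi> x) a Y \<in> I" using \<phi> \<psi> a Y by (simp add: Qs_def I_add)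
  qed
  show "\<phi> \<circ> \<psi> \<in> Qs" unfolding Qs_def
  proof (intro CollectI conjI allI impI ballI)
    have l\<phi>: "lin \<phi>" and l\<psi>: "lin \<psi>" using \<phi> \<psi> by (auto simp: Qs_def)
    show "lin (\<phi> \<circ> \<psi>)" using lin_comp[OF l\<phi> l\<psi>] .
    fix a Y assume a: "valid_exp N a" and Y: "Y \<in> I"
    show "T (\<phi> \<circ> \<psi>) a Y \<in> I" unfolding Q_comp_aux[OF l\<phi> l\<psi>]
    proof (rule I_sum[OF finite_G])
      fix e assume e: "e \<in> Gset"
      have "T \<psi> e Y \<in> I" using \<psi> G_valid[OF e] Y by (simp add: Qs_def)
      then show "T \<phi> (\<lambda>i. a i - e i) (T \<psi> e Y) \<in> I"
        using \<phi> valid_sub[OF a G_valid[OF e]] by (simp add: Qs_def)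
    qed
  qed
next
  fix \<phi> r assume \<phi>: "\<phi> \<in> Qs"
  show "(\<lambda>x. sc r (\<phi> x)) \<in> Qs" unfolding Qs_def
  proof (intro CollectI conjI allI impI ballI)
    show "lin (\<lambda>x. sc r (\<phi> x))" using \<phi> by (simp add: Qs_def lin_scf)
    fix a Y assume a: "valid_exp N a" and Y: "Y \<in> I"
    have "T (\<lambda>x. sc r (\<phi> x)) a Y = (\<lambda>k. sc r (T \<phi> a Y k))"
      by (simp add: T_def lin_scale[OF lin_P])
    then show "T (\<lambda>x. sc r (\<phi> x)) a Y \<in> I" using \<phi> a Y by (simp add: Qs_def I_scale)
  qed
next
  fix x
  show "br x \<in> Qs" unfolding Qs_def
  proof (intro CollectI conjI allI impI ballI)
    show "lin (br x)" by (rule lin_br)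
    fix a Y assume a: "valid_exp N a" and Y: "Y \<in> I"
    have "(\<lambda>b. if b = a then P (cls N m a) x else 0) \<in> L"
      unfolding multiloop_def gR_def
    proof (intro CollectI conjI allI impI)
      show "finite {k. (if k = a then P (cls N m a) x else 0) \<noteq> 0}"
        by (rule finite_subset[of _ "{a}"]) auto
      fix k
      show "(if k = a then P (cls N m a) x else 0) \<noteq> 0 \<Longrightarrow> valid_exp N k" using a by (auto split: if_splits)
      show "(if k = a then P (cls N m a) x else 0) \<in> gc k"
        using P_in[of "cls N m a" x] gc_cls[of a] by (auto simp: gc_zero)
    qed
    then show "T (br x) a Y \<in> I" using Q_br_aux[OF Y] I_br Y by simp
  qed
qed

lemma lin_Qs: "lin \<phi> \<Longrightarrow> \<phi> \<in> Qs"
  using all_in_Q[OF alg_Qs] by blast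

end



lemma lmult_nz:
  fixes f g :: "(nat \<Rightarrow> int) \<Rightarrow> 'a::comm_ring_1"
  assumes "lmult f g k \<noteq> 0" shows "\<exists>a. f a \<noteq> 0 \<and> g (\<lambda>i. k i - a i) \<noteq> 0"
proof (rule ccontr)
  assume "\<not> ?thesis"
  then have "\<forall>a\<in>{a. f a \<noteq> 0}. f a * g (\<lambda>i. k i - a i) = 0" by auto
  then show False using assms by (simp add: lmult_def)
qed

lemma laurent_lmult:
  fixes f g :: "(nat \<Rightarrow> int) \<Rightarrow> 'f::comm_ring_1"
  assumes f: "f \<in> laurent N" and g: "g \<in> laurent N"
  shows "lmult f g \<in> laurent N"
proof -
  let ?Sf = "{a. f a \<noteq> 0}" and ?Sg = "{a. g a \<noteq> 0}"
  have fin: "finite ?Sf" "finite ?Sg" using f g by (auto simp: laurent_def)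
  have sub: "{k. lmult f g k \<noteq> 0} \<subseteq> (\<lambda>(a, b). (\<lambda>i. a i + b i)) ` (?Sf \<times> ?Sg)"
  proof
    fix k assume "k \<in> {k. lmult f g k \<noteq> 0}"
    then obtain a where a: "f a \<noteq> 0" "g (\<lambda>i. k i - a i) \<noteq> 0" using lmult_nz by blast
    have "k = (\<lambda>i. a i + (k i - a i))" by simp
    then show "k \<in> (\<lambda>(a, b). (\<lambda>i. a i + b i)) ` (?Sf \<times> ?Sg)"
      using a by (intro image_eqI[where x="(a, \<lambda>i. k i - a i)"]) auto
  qed
  have val: "valid_exp N k" if nz: "lmult f g k \<noteq> 0" for k
  proof -
    obtain a where a: "f a \<noteq> 0" "g (\<lambda>i. k i - a i) \<noteq> 0" using lmult_nz[OF nz] by blast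
    then have "valid_exp N a" "valid_exp N (\<lambda>i. k i - a i)" using f g by (auto simp: laurent_def)
    then show ?thesis by (simp add: valid_exp_def)
  qed
  show ?thesis unfolding laurent_def
    using finite_subset[OF sub] fin val by auto
qed

lemma laurent_ideal: "ring_ideal N (laurent N :: ((nat \<Rightarrow> int) \<Rightarrow> 'f::comm_ring_1) set)"
  unfolding ring_ideal_def
proof (intro conjI ballI)
  show "(\<lambda>_. 0) \<in> (laurent N :: ((nat \<Rightarrow> int) \<Rightarrow> 'f) set)" by (simp add: laurent_def)
next
  fix f g :: "(nat \<Rightarrow> int) \<Rightarrow> 'f" assume f: "f \<in> laurent N" and g: "g \<in> laurent N"
  show "lmult f g \<in> laurent N" using laurent_lmult[OF f g] .
  have "{k. f k + g k \<noteq> 0} \<subseteq> {k. f k \<noteq> 0} \<union> {k. g k \<noteq> 0}" by auto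
  then show "(\<lambda>k. f k + g k) \<in> laurent N" using f g unfolding laurent_def
    by (auto intro: finite_subset)
qed simp

lemma gen_ideal_least: "ring_ideal N J \<Longrightarrow> S \<subseteq> J \<Longrightarrow> gen_ideal N S \<subseteq> J"
  by (auto simp: gen_ideal_def)

lemma gen_ideal_sub: "S \<subseteq> gen_ideal N S"
  by (auto simp: gen_ideal_def)

lemma gen_ideal_ideal:
  assumes S: "S \<subseteq> (laurent N :: ((nat \<Rightarrow> int) \<Rightarrow> 'f::comm_ring_1) set)"
  shows "ring_ideal N (gen_ideal N S)"
proof -
  define F where "F = {J. ring_ideal N J \<and> S \<subseteq> J}"
  have G: "gen_ideal N S = \<Inter>F" by (simp add: gen_ideal_def F_def)
  have ne: "laurent N \<in> F" using laurent_ideal S by (simp add: F_def)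
  have RI: "\<And>J. J \<in> F \<Longrightarrow> ring_ideal N J" by (simp add: F_def)
  show ?thesis unfolding G ring_ideal_def
  proof (intro conjI ballI)
    show "\<Inter>F \<subseteq> laurent N" using ne by blast
    show "(\<lambda>_. 0) \<in> \<Inter>F" using RI by (auto simp: ring_ideal_def)
    fix f g :: "(nat \<Rightarrow> int) \<Rightarrow> 'f" assume "f \<in> \<Inter>F" "g \<in> \<Inter>F"
    then show "(\<lambda>k. f k + g k) \<in> \<Inter>F" using RI by (auto simp: ring_ideal_def)
  next
    fix f g :: "(nat \<Rightarrow> int) \<Rightarrow> 'f" assume "f \<in> laurent N" "g \<in> \<Inter>F"
    then show "lmult f g \<in> \<Inter>F" using RI by (auto simp: ring_ideal_def)
  qed
qed

lemma ring_ideal_sum: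
  assumes J: "ring_ideal N J"
  shows "finite S \<Longrightarrow> (\<And>j. j \<in> S \<Longrightarrow> f j \<in> J) \<Longrightarrow> (\<lambda>k. \<Sum>j\<in>S. f j k) \<in> J"
proof (induction S rule: finite_induct)
  case empty then show ?case using J by (simp add: ring_ideal_def)
next
  case (insert x S)
  then have "(\<lambda>k. f x k + (\<lambda>k. \<Sum>j\<in>S. f j k) k) \<in> J" using J by (simp add: ring_ideal_def)
  then show ?case using insert by simp
qed

lemma sum_to_idx:
  assumes "finite S" "\<And>s. s \<in> S \<Longrightarrow> Pr (x s) (f s)"
  obtains n xs fs where "(\<lambda>k. \<Sum>s\<in>S. tns sc (x s) (f s) k) = (\<lambda>k. \<Sum>j<(n::nat). tns sc (xs j) (fs j) k)"
    "\<forall>j<n. Pr (xs j) (fs j)"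
proof -
  obtain h where h: "bij_betw h {0..<card S} S" using ex_bij_betw_nat_finite[OF assms(1)] by blast
  have "(\<Sum>s\<in>S. tns sc (x s) (f s) k) = (\<Sum>j<card S. tns sc (x (h j)) (f (h j)) k)" for k
    using sum.reindex_bij_betw[OF h, of "\<lambda>s. tns sc (x s) (f s) k"] by (simp add: atLeast0LessThan)
  then have eq: "(\<lambda>k. \<Sum>s\<in>S. tns sc (x s) (f s) k) = (\<lambda>k. \<Sum>j<card S. tns sc (x (h j)) (f (h j)) k)"
    by simp
  have pr: "\<forall>j<card S. Pr (x (h j)) (f (h j))"
    using bij_betwE[OF h] assms(2) by auto
  show thesis using that[where n="card S" and xs="\<lambda>j. x (h j)" and fs="\<lambda>j. f (h j)"] eq pr by simp
qed

context mlI begin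

definition restr :: "(nat \<Rightarrow> int) \<Rightarrow> ((nat \<Rightarrow> int) \<Rightarrow> 'f) \<Rightarrow> (nat \<Rightarrow> int) \<Rightarrow> 'f" where
  "restr c f = (\<lambda>k. if cls N m k = c then f k else 0)"

definition shift :: "(nat \<Rightarrow> int) \<Rightarrow> ((nat \<Rightarrow> int) \<Rightarrow> 'f) \<Rightarrow> (nat \<Rightarrow> int) \<Rightarrow> 'f" where
  "shift a f = (\<lambda>k. f (\<lambda>i. k i - a i))"

lemma gen_act:
  assumes Y: "Y \<in> I" and c: "c \<in> Gset" and v: "v \<in> B c" and d: "d \<in> Gset" and w: "w \<in> gc d"
    and a: "valid_exp N a" and ca: "cls N m a = cls N m (\<lambda>i. d i - c i)"
  shows "tns sc w (shift a (proj sc N m B c v Y)) \<in> I"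
proof -
  define \<phi> where "\<phi> x = sc (V.representation (B c) (P c x) v) w" for x
  have ind: "V.independent (B c)" and sp: "\<And>x. P c x \<in> V.span (B c)"
    using B_indep[OF c] B_span[OF c] P_in by auto
  have l\<phi>: "lin \<phi>" unfolding lin_def \<phi>_def
    by (simp add: lin_add[OF lin_P] lin_scale[OF lin_P] V.representation_add[OF ind sp sp]
        V.representation_scale[OF ind sp] V.scale_left_distrib V.scale_scale)
  have TI: "T \<phi> a Y \<in> I" using lin_Qs[OF l\<phi>] a Y by (simp add: Qs_def)
  have "T \<phi> a Y = tns sc w (shift a (proj sc N m B c v Y))"
  proof
    fix k
    define y where "y = Y (\<lambda>i. k i - a i)"
    have y: "y \<in> gc (\<lambda>i. k i - a i)" using L_gc I_L Y by (auto simp: y_def)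
    show "T \<phi> a Y k = tns sc w (shift a (proj sc N m B c v Y)) k"
    proof (cases "valid_exp N (\<lambda>i. k i - a i) \<and> cls N m (\<lambda>i. k i - a i) = c")
      case True
      then have Py: "P c y = y" using P_on[OF y c] by simp
      have "cls N m k = cls N m d"
      proof -
        have "cls N m (\<lambda>i. k i - a i) = cls N m c" using True c G_cls_iff by simp
        then have h1: "\<forall>i<N. int (m i) dvd ((k i - a i) - c i)" by (simp add: cls_eq_dvd)
        have h2: "\<forall>i<N. int (m i) dvd (a i - (d i - c i))" using ca by (simp add: cls_eq_dvd)
        show ?thesis unfolding cls_eq_dvd
        proof (intro allI impI)
          fix i assume "i < N"
          then have "int (m i) dvd ((k i - a i) - c i) + (a i - (d i - c i))"
            using h1 h2 \<open>i < N\<close> by (intro dvd_add) auto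
          moreover have "((k i - a i) - c i) + (a i - (d i - c i)) = k i - d i" by simp
          ultimately show "int (m i) dvd (k i - d i)" by simp
        qed
      qed
      then have "cls N m k = d" using d G_cls_iff by simp
      then have "P (cls N m k) (sc r w) = sc r w" for r
        using P_on[OF w d] d G_cls_iff by (simp add: lin_scale[OF lin_P])
      then show ?thesis using True
        by (simp add: T_def \<phi>_def tns_def shift_def proj_def y_def[symmetric] Py)
    next
      case False
      have "P c y = 0"
      proof (cases "valid_exp N (\<lambda>i. k i - a i)")
        case True
        then show ?thesis using False P_on[OF y c] by simp
      next
        case False
        then have "y = 0" using L_valid I_L Y by (auto simp: y_def)
        then show ?thesis by (simp add: lin_zero[OF lin_P])
      qed
      then show ?thesis using False
        by (auto simp: T_def \<phi>_def tns_def shift_def proj_def y_def[symmetric]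
            V.representation_zero lin_zero[OF lin_P])
    qed
  qed
  then show ?thesis using TI by simp
qed

end


lemma laurent_add: fixes f g :: "(nat \<Rightarrow> int) \<Rightarrow> 'a::monoid_add" shows "f \<in> laurent N \<Longrightarrow> g \<in> laurent N \<Longrightarrow> (\<lambda>k. f k + g k) \<in> laurent N"
proof -
  assume f: "f \<in> laurent N" and g: "g \<in> laurent N"
  have "{k. f k + g k \<noteq> 0} \<subseteq> {k. f k \<noteq> 0} \<union> {k. g k \<noteq> 0}" by auto
  then show ?thesis using f g unfolding laurent_def by (auto intro: finite_subset)
qed

context mlI begin

abbreviation "Iid \<equiv> assoc_ideal sc N m B I"
abbreviation "Gens \<equiv> {proj sc N m B (cls N m k) v X | k v X. valid_exp N k \<and> v \<in> B (cls N m k) \<and> X \<in> I}"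

lemma Iid_gen: "Iid = gen_ideal N Gens" by (simp add: assoc_ideal_def)

lemma proj_nz: "proj sc N m B c v X k \<noteq> 0 \<Longrightarrow> valid_exp N k \<and> cls N m k = c \<and> X k \<noteq> 0"
  by (auto simp: proj_def V.representation_zero split: if_splits)

lemma proj_laurent: assumes X: "X \<in> I" shows "proj sc N m B c v X \<in> laurent N"
proof -
  have "{k. proj sc N m B c v X k \<noteq> 0} \<subseteq> {k. X k \<noteq> 0}"
  proof
    fix k assume "k \<in> {k. proj sc N m B c v X k \<noteq> 0}"
    then show "k \<in> {k. X k \<noteq> 0}" using proj_nz[of c v X k] by simp
  qed
  then show ?thesis unfolding laurent_def using L_fin I_L X proj_nz by (auto intro: finite_subset)
qed

lemma Gens_laurent: "Gens \<subseteq> laurent N" using proj_laurent by blast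

lemma Iid_ideal: "ring_ideal N Iid"
  unfolding Iid_gen by (rule gen_ideal_ideal[OF Gens_laurent])

lemma Iid_laurent: "Iid \<subseteq> laurent N" using Iid_ideal by (simp add: ring_ideal_def)

lemma restr_laurent: "f \<in> laurent N \<Longrightarrow> restr c f \<in> laurent N"
proof -
  assume f: "f \<in> laurent N"
  have "{k. restr c f k \<noteq> 0} \<subseteq> {k. f k \<noteq> 0}" by (auto simp: restr_def)
  then show ?thesis using f unfolding laurent_def by (auto simp: restr_def intro: finite_subset)
qed

lemma restr_lmult_shift:
  assumes c: "c \<in> Gset"
  shows "restr c (lmult f g) (\<lambda>i. k i - a i) =
    (\<Sum>b\<in>{b. f b \<noteq> 0}. f b * restr (cls N m (\<lambda>i. c i - b i)) g (\<lambda>i. k i - (a i + b i)))"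
proof -
  have cond: "cls N m (\<lambda>i. k i - (a i + b i)) = cls N m (\<lambda>i. c i - b i) \<longleftrightarrow>
      cls N m (\<lambda>i. k i - a i) = c" for b
  proof -
    have "(\<lambda>i. k i - (a i + b i)) = (\<lambda>i. (k i - a i) - b i)" by (simp add: algebra_simps)
    then show ?thesis using cls_shift_iff[OF c, of "\<lambda>i. k i - a i" b] by simp
  qed
  have sh: "(\<lambda>i. k i - a i - b i) = (\<lambda>i. k i - (a i + b i))" for b by (simp add: algebra_simps)
  show ?thesis
  proof (cases "cls N m (\<lambda>i. k i - a i) = c")
    case True
    then show ?thesis using cond by (simp add: restr_def lmult_def sh)
  next
    case False
    then show ?thesis using cond by (simp add: restr_def)
  qed
qed

lemma cls_dvd: assumes i: "i < N" shows "int (m i) dvd (cls N m x i - x i)"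
proof -
  have "cls N m (cls N m x) = cls N m x" by (rule cls_cls)
  then show ?thesis using i unfolding cls_eq_dvd by blast
qed

definition Jset :: "((nat \<Rightarrow> int) \<Rightarrow> 'f) set" where
  "Jset = {f \<in> laurent N. \<forall>c\<in>Gset. \<forall>d\<in>Gset. \<forall>w\<in>gc d. \<forall>a. valid_exp N a \<longrightarrow>
      cls N m a = cls N m (\<lambda>i. d i - c i) \<longrightarrow> tns sc w (shift a (restr c f)) \<in> I}"

lemma tns_zero: "tns sc w (\<lambda>_. 0) = (\<lambda>_. 0)" by (simp add: tns_def)

lemma J_ideal: "ring_ideal N Jset"
  unfolding ring_ideal_def
proof (intro conjI ballI)
  show "Jset \<subseteq> laurent N" by (auto simp: Jset_def)
  have "restr c (\<lambda>_. 0) = (\<lambda>_. 0)" for c by (simp add: restr_def)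
  then show "(\<lambda>_. 0) \<in> Jset"
    by (simp add: Jset_def shift_def tns_zero I_zero laurent_def)
next
  fix f g assume f: "f \<in> Jset" and g: "g \<in> Jset"
  have fl: "f \<in> laurent N" and gl: "g \<in> laurent N" using f g by (auto simp: Jset_def)
  have "(\<lambda>k. f k + g k) \<in> laurent N" using laurent_add[OF fl gl] .
  moreover have "tns sc w (shift a (restr c (\<lambda>k. f k + g k))) =
     (\<lambda>k. tns sc w (shift a (restr c f)) k + tns sc w (shift a (restr c g)) k)" for w a c
    by (auto simp: tns_def shift_def restr_def V.scale_left_distrib)
  ultimately show "(\<lambda>k. f k + g k) \<in> Jset" using f g by (auto simp: Jset_def I_add)
next
  fix f g :: "(nat \<Rightarrow> int) \<Rightarrow> 'f" assume fl: "f \<in> laurent N" and g: "g \<in> Jset"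
  have gl: "g \<in> laurent N" using g by (auto simp: Jset_def)
  have gJ: "\<And>c d w a. c \<in> Gset \<Longrightarrow> d \<in> Gset \<Longrightarrow> w \<in> gc d \<Longrightarrow> valid_exp N a \<Longrightarrow>
     cls N m a = cls N m (\<lambda>i. d i - c i) \<Longrightarrow> tns sc w (shift a (restr c g)) \<in> I"
    using g by (auto simp: Jset_def)
  have "lmult f g \<in> laurent N" using laurent_lmult[OF fl gl] .
  moreover
  have "tns sc w (shift a (restr c (lmult f g))) \<in> I"
    if c: "c \<in> Gset" and d: "d \<in> Gset" and w: "w \<in> gc d" and a: "valid_exp N a"
       and ca: "cls N m a = cls N m (\<lambda>i. d i - c i)" for c d w a
  proof -
    have eq: "tns sc w (shift a (restr c (lmult f g))) = (\<lambda>k. \<Sum>b\<in>{b. f b \<noteq> 0}.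
        sc (f b) (tns sc w (shift (\<lambda>i. a i + b i) (restr (cls N m (\<lambda>i. c i - b i)) g)) k))"
      by (simp add: tns_def shift_def restr_lmult_shift[OF c] V.scale_sum_left V.scale_scale)
    have fin: "finite {b. f b \<noteq> 0}" using fl by (simp add: laurent_def)
    show ?thesis unfolding eq
    proof (rule I_sum[OF fin], rule I_scale)
      fix b assume "b \<in> {b. f b \<noteq> 0}"
      then have bv: "valid_exp N b" using fl by (auto simp: laurent_def)
      let ?c' = "cls N m (\<lambda>i. c i - b i)"
      have c'G: "?c' \<in> Gset" by (rule cls_in_G)
      have "cls N m (\<lambda>i. a i + b i) = cls N m (\<lambda>i. d i - ?c' i)"
        unfolding cls_eq_dvd
      proof (intro allI impI)
        fix i assume i: "i < N"
        have "int (m i) dvd (a i - (d i - c i))" using ca i by (simp add: cls_eq_dvd)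
        moreover have "int (m i) dvd (?c' i - (c i - b i))"
          using cls_dvd[OF i] .
        ultimately have "int (m i) dvd (a i - (d i - c i)) + (?c' i - (c i - b i))" by (rule dvd_add)
        moreover have "(a i - (d i - c i)) + (?c' i - (c i - b i)) = a i + b i - (d i - ?c' i)" by simp
        ultimately show "int (m i) dvd (a i + b i - (d i - ?c' i))" by simp
      qed
      then show "tns sc w (shift (\<lambda>i. a i + b i) (restr ?c' g)) \<in> I"
        using gJ[OF c'G d w valid_add[OF a bv]] by simp
    qed
  qed
  ultimately show "lmult f g \<in> Jset" by (simp add: Jset_def)
qed

lemma restr_proj: assumes "c0 = cls N m k0"
  shows "restr c (proj sc N m B c0 v X) = (if c = c0 then proj sc N m B c0 v X else (\<lambda>_. 0))"
proof
  fix k show "restr c (proj sc N m B c0 v X) k = (if c = c0 then proj sc N m B c0 v X else (\<lambda>_. 0)) k"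
    using proj_nz[of c0 v X k] by (auto simp: restr_def)
qed

lemma Gens_J: "Gens \<subseteq> Jset"
proof
  fix p assume "p \<in> Gens"
  then obtain k0 v X where p: "p = proj sc N m B (cls N m k0) v X" and k0: "valid_exp N k0"
    and v: "v \<in> B (cls N m k0)" and X: "X \<in> I" by blast
  let ?c0 = "cls N m k0"
  have "tns sc w (shift a (restr c p)) \<in> I"
    if c: "c \<in> Gset" and d: "d \<in> Gset" and w: "w \<in> gc d" and a: "valid_exp N a"
       and ca: "cls N m a = cls N m (\<lambda>i. d i - c i)" for c d w a
  proof (cases "c = ?c0")
    case True
    then show ?thesis using gen_act[OF X cls_in_G v d w a] ca restr_proj[of ?c0 k0 c v X] p by simp
  next
    case False
    then have "restr c p = (\<lambda>_. 0)" using restr_proj[of ?c0 k0 c v X] p by simp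
    then show ?thesis by (simp add: shift_def tns_zero I_zero)
  qed
  then show "p \<in> Jset" using proj_laurent[OF X] p by (simp add: Jset_def)
qed

lemma Iid_J: "Iid \<subseteq> Jset"
  unfolding Iid_gen by (rule gen_ideal_least[OF J_ideal Gens_J])

definition mono :: "(nat \<Rightarrow> int) \<Rightarrow> 'f \<Rightarrow> (nat \<Rightarrow> int) \<Rightarrow> 'f" where
  "mono b r = (\<lambda>k. if k = b then r else 0)"

lemma lmult_mono: "lmult (mono b r) h k = r * h (\<lambda>i. k i - b i)"
proof (cases "r = 0")
  case True
  then have "{a. mono b r a \<noteq> 0} = {}" by (simp add: mono_def)
  then show ?thesis using True by (simp add: lmult_def)
next
  case False
  then have "{a. mono b r a \<noteq> 0} = {b}" by (auto simp: mono_def)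
  then show ?thesis by (simp add: lmult_def mono_def)
qed

lemma mono_laurent: "valid_exp N b \<Longrightarrow> mono b r \<in> laurent N"
  by (auto simp: laurent_def mono_def intro: finite_subset[of _ "{b}"])

definition J2 :: "((nat \<Rightarrow> int) \<Rightarrow> 'f) set" where
  "J2 = {f \<in> laurent N. \<forall>c\<in>Gset. restr c f \<in> Iid}"

lemma J2_ideal: "ring_ideal N J2"
  unfolding ring_ideal_def
proof (intro conjI ballI)
  show "J2 \<subseteq> laurent N" by (auto simp: J2_def)
  have "restr c (\<lambda>_. 0) = (\<lambda>_. 0)" for c by (simp add: restr_def)
  then show "(\<lambda>_. 0) \<in> J2"
    using Iid_ideal by (simp add: J2_def ring_ideal_def laurent_def)
next
  fix f g assume f: "f \<in> J2" and g: "g \<in> J2"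
  have fl: "f \<in> laurent N" and gl: "g \<in> laurent N" using f g by (auto simp: J2_def)
  have "(\<lambda>k. f k + g k) \<in> laurent N" using laurent_add[OF fl gl] .
  moreover have "restr c (\<lambda>k. f k + g k) = (\<lambda>k. restr c f k + restr c g k)" for c
    by (auto simp: restr_def)
  ultimately show "(\<lambda>k. f k + g k) \<in> J2" using f g Iid_ideal by (auto simp: J2_def ring_ideal_def)
next
  fix f g :: "(nat \<Rightarrow> int) \<Rightarrow> 'f" assume fl: "f \<in> laurent N" and g: "g \<in> J2"
  have gl: "g \<in> laurent N" using g by (auto simp: J2_def)
  have "lmult f g \<in> laurent N" using laurent_lmult[OF fl gl] .
  moreover
  have "restr c (lmult f g) \<in> Iid" if c: "c \<in> Gset" for c
  proof -
    have eq: "restr c (lmult f g) = (\<lambda>k. \<Sum>b\<in>{b. f b \<noteq> 0}.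
        lmult (mono b (f b)) (restr (cls N m (\<lambda>i. c i - b i)) g) k)"
    proof
      fix k show "restr c (lmult f g) k = (\<Sum>b\<in>{b. f b \<noteq> 0}.
        lmult (mono b (f b)) (restr (cls N m (\<lambda>i. c i - b i)) g) k)"
        using restr_lmult_shift[OF c, of f g k "\<lambda>_. 0"] by (simp add: lmult_mono)
    qed
    have fin: "finite {b. f b \<noteq> 0}" using fl by (simp add: laurent_def)
    show ?thesis unfolding eq
    proof (rule ring_ideal_sum[OF Iid_ideal fin])
      fix b assume "b \<in> {b. f b \<noteq> 0}"
      then have bv: "valid_exp N b" using fl by (auto simp: laurent_def)
      have "restr (cls N m (\<lambda>i. c i - b i)) g \<in> Iid" using g cls_in_G by (simp add: J2_def)
      then show "lmult (mono b (f b)) (restr (cls N m (\<lambda>i. c i - b i)) g) \<in> Iid"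
        using Iid_ideal mono_laurent[OF bv] by (simp add: ring_ideal_def)
    qed
  qed
  ultimately show "lmult f g \<in> J2" by (simp add: J2_def)
qed

lemma Gens_J2: "Gens \<subseteq> J2"
proof
  fix p assume pG: "p \<in> Gens"
  then obtain k0 v X where p: "p = proj sc N m B (cls N m k0) v X" and X: "X \<in> I" by blast
  have "Gens \<subseteq> Iid" unfolding Iid_gen by (rule gen_ideal_sub)
  then have pI: "p \<in> Iid" using pG by (rule subsetD)
  have "restr c p \<in> Iid" for c
    using restr_proj[of "cls N m k0" k0 c v X] p pI Iid_ideal by (auto simp: ring_ideal_def)
  then show "p \<in> J2" using proj_laurent[OF X] p by (simp add: J2_def)
qed

lemma Iid_J2: "Iid \<subseteq> J2"
  unfolding Iid_gen by (rule gen_ideal_least[OF J2_ideal Gens_J2])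

end


context mlI begin

lemma stepA: assumes Y: "Y \<in> I" shows "Y \<in> g_tensor sc Iid"
proof -
  let ?S = "Sigma Gset B"
  have finS: "finite ?S" using finite_G B_finite by (rule finite_SigmaI)
  have YL: "Y \<in> L" using Y I_L by blast
  have fb: "\<forall>c\<in>Gset. finite (B c)" using B_finite by blast
  have rep: "Y = (\<lambda>k. \<Sum>cv\<in>?S. tns sc (snd cv) (proj sc N m B (fst cv) (snd cv) Y) k)"
  proof
    fix k
    have "(\<Sum>cv\<in>?S. tns sc (snd cv) (proj sc N m B (fst cv) (snd cv) Y) k) =
        (\<Sum>c\<in>Gset. \<Sum>v\<in>B c. sc (proj sc N m B c v Y k) v)"
      unfolding tns_def by (subst sum.Sigma[OF finite_G fb]) (simp add: case_prod_beta)
    also have "\<dots> = Y k"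
    proof (cases "valid_exp N k")
      case True
      have inner: "(\<Sum>v\<in>B c. sc (proj sc N m B c v Y k) v) =
          (if c = cls N m k then (\<Sum>v\<in>B c. sc (V.representation (B c) (Y k) v) v) else 0)" for c
        using True by (auto simp: proj_def)
      have "(\<Sum>c\<in>Gset. \<Sum>v\<in>B c. sc (proj sc N m B c v Y k) v) =
          (\<Sum>v\<in>B (cls N m k). sc (V.representation (B (cls N m k)) (Y k) v) v)"
        by (simp only: inner) (subst sum.delta[OF finite_G], simp add: cls_in_G)
      also have "\<dots> = Y k"
      proof (rule V.sum_representation_eq)
        show "V.independent (B (cls N m k))" using B_indep cls_in_G by blast
        show "Y k \<in> V.span (B (cls N m k))" using B_span[OF cls_in_G] L_gc[OF YL] gc_cls by simp
        show "finite (B (cls N m k))" using B_finite cls_in_G by blast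
      qed simp
      finally show ?thesis .
    next
      case False
      then show ?thesis using L_valid[OF YL False] by (simp add: proj_def)
    qed
    finally show "Y k = (\<Sum>cv\<in>?S. tns sc (snd cv) (proj sc N m B (fst cv) (snd cv) Y) k)" by simp
  qed
  have mem: "proj sc N m B (fst cv) (snd cv) Y \<in> Iid" if cv: "cv \<in> ?S" for cv
  proof -
    have c: "fst cv \<in> Gset" and v: "snd cv \<in> B (fst cv)" using cv by auto
    have cc: "cls N m (fst cv) = fst cv" using c G_cls_iff by simp
    have "proj sc N m B (fst cv) (snd cv) Y \<in> Gens"
      unfolding mem_Collect_eq
      by (rule exI[where x="fst cv"], rule exI[where x="snd cv"], rule exI[where x=Y])
         (use G_valid[OF c] v Y cc in simp)
    moreover have "Gens \<subseteq> Iid" unfolding Iid_gen by (rule gen_ideal_sub)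
    ultimately show ?thesis by (rule subsetD[rotated])
  qed
  have "\<exists>(n::nat) xs fs. (\<lambda>k. \<Sum>cv\<in>?S. tns sc (snd cv) (proj sc N m B (fst cv) (snd cv) Y) k) =
      (\<lambda>k. \<Sum>j<n. tns sc (xs j) (fs j) k) \<and> (\<forall>j<n. fs j \<in> Iid)"
  proof (rule sum_to_idx[OF finS, where Pr="\<lambda>x f. f \<in> Iid" and x=snd and f="\<lambda>cv. proj sc N m B (fst cv) (snd cv) Y"])
    show "\<And>s. s \<in> ?S \<Longrightarrow> proj sc N m B (fst s) (snd s) Y \<in> Iid" using mem by simp
  next
    fix n xs fs assume "(\<lambda>k. \<Sum>s\<in>?S. tns sc (snd s) (proj sc N m B (fst s) (snd s) Y) k) =
      (\<lambda>k. \<Sum>j<(n::nat). tns sc (xs j) (fs j) k)" "\<forall>j<n. fs j \<in> Iid"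
    then show ?thesis by blast
  qed
  then obtain n xs fs where eq: "(\<lambda>k. \<Sum>cv\<in>?S. tns sc (snd cv) (proj sc N m B (fst cv) (snd cv) Y) k) =
      (\<lambda>k. \<Sum>j<(n::nat). tns sc (xs j) (fs j) k)" and pr: "\<forall>j<n. fs j \<in> Iid"
    by blast
  show ?thesis unfolding g_tensor_def mem_Collect_eq
    by (rule exI[where x=n], rule exI[where x=xs], rule exI[where x=fs]) (use rep eq pr in simp)
qed

lemma stepB: assumes XL: "X \<in> L" and XT: "X \<in> g_tensor sc Iid"
  shows "X \<in> graded_tensor sc N m \<sigma> \<xi> Iid"
proof -
  obtain n xs fs where X: "X = (\<lambda>k. \<Sum>j<(n::nat). tns sc (xs j) (fs j) k)" and fsI: "\<forall>j<n. fs j \<in> Iid"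
    using XT unfolding g_tensor_def mem_Collect_eq by blast
  let ?S = "{..<n} \<times> Gset"
  have finS: "finite ?S" using finite_G by simp
  have rep: "X = (\<lambda>k. \<Sum>jc\<in>?S. tns sc (P (snd jc) (xs (fst jc))) (restr (snd jc) (fs (fst jc))) k)"
  proof
    fix k
    have inner: "(\<Sum>c\<in>Gset. sc (restr c (fs j) k) (P c (xs j))) = sc (fs j k) (P (cls N m k) (xs j))" for j
    proof -
      have "(\<Sum>c\<in>Gset. sc (restr c (fs j) k) (P c (xs j))) =
          (\<Sum>c\<in>Gset. if c = cls N m k then sc (fs j k) (P c (xs j)) else 0)"
        by (rule sum.cong) (auto simp: restr_def)
      also have "\<dots> = sc (fs j k) (P (cls N m k) (xs j))"
        by (subst sum.delta[OF finite_G]) (simp add: cls_in_G)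
      finally show ?thesis .
    qed
    have "(\<Sum>jc\<in>?S. tns sc (P (snd jc) (xs (fst jc))) (restr (snd jc) (fs (fst jc))) k) =
        (\<Sum>j<n. \<Sum>c\<in>Gset. sc (restr c (fs j) k) (P c (xs j)))"
      unfolding tns_def by (subst sum.cartesian_product) (simp add: case_prod_beta)
    also have "\<dots> = (\<Sum>j<n. sc (fs j k) (P (cls N m k) (xs j)))" by (simp add: inner)
    also have "\<dots> = P (cls N m k) (\<Sum>j<n. sc (fs j k) (xs j))"
      by (simp add: lin_sum[OF lin_P] lin_scale[OF lin_P])
    also have "(\<Sum>j<n. sc (fs j k) (xs j)) = X k" by (simp add: X tns_def)
    also have "P (cls N m k) (X k) = X k" using P_id[OF L_gc[OF XL]] .
    finally show "X k = (\<Sum>jc\<in>?S. tns sc (P (snd jc) (xs (fst jc))) (restr (snd jc) (fs (fst jc))) k)" by simp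
  qed
  let ?Pr = "\<lambda>x f. \<exists>c. valid_exp N c \<and> x \<in> g_cls sc N \<sigma> \<xi> c \<and> f \<in> Iid \<inter> laurent_cls N m c"
  have mem: "?Pr (P (snd jc) (xs (fst jc))) (restr (snd jc) (fs (fst jc)))" if jc: "jc \<in> ?S" for jc
  proof -
    have c: "snd jc \<in> Gset" and j: "fst jc < n" using jc by auto
    have fI: "fs (fst jc) \<in> Iid" using fsI j by simp
    then have fJ2: "fs (fst jc) \<in> J2" using Iid_J2 by blast
    have r1: "restr (snd jc) (fs (fst jc)) \<in> Iid" using fJ2 c by (simp add: J2_def)
    have r2: "restr (snd jc) (fs (fst jc)) \<in> laurent_cls N m (snd jc)"
      using restr_laurent[of "fs (fst jc)" "snd jc"] fI Iid_laurent
      by (auto simp: laurent_cls_def restr_def)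
    show ?thesis
      by (rule exI[where x="snd jc"]) (use G_valid[OF c] P_in r1 r2 in simp)
  qed
  have "\<exists>(n'::nat) xs' fs'. (\<lambda>k. \<Sum>jc\<in>?S. tns sc (P (snd jc) (xs (fst jc))) (restr (snd jc) (fs (fst jc))) k) =
      (\<lambda>k. \<Sum>j<n'. tns sc (xs' j) (fs' j) k) \<and> (\<forall>j<n'. ?Pr (xs' j) (fs' j))"
  proof (rule sum_to_idx[OF finS, where Pr="?Pr" and x="\<lambda>jc. P (snd jc) (xs (fst jc))"
        and f="\<lambda>jc. restr (snd jc) (fs (fst jc))"])
    show "\<And>s. s \<in> ?S \<Longrightarrow> ?Pr (P (snd s) (xs (fst s))) (restr (snd s) (fs (fst s)))" using mem by blast
  next
    fix n' xs' fs' assume "(\<lambda>k. \<Sum>s\<in>?S. tns sc (P (snd s) (xs (fst s))) (restr (snd s) (fs (fst s))) k) =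
      (\<lambda>k. \<Sum>j<(n'::nat). tns sc (xs' j) (fs' j) k)" "\<forall>j<n'. ?Pr (xs' j) (fs' j)"
    then show ?thesis by blast
  qed
  then obtain n' xs' fs' where eq: "(\<lambda>k. \<Sum>jc\<in>?S. tns sc (P (snd jc) (xs (fst jc))) (restr (snd jc) (fs (fst jc))) k) =
      (\<lambda>k. \<Sum>j<(n'::nat). tns sc (xs' j) (fs' j) k)" and pr: "\<forall>j<n'. ?Pr (xs' j) (fs' j)"
    by blast
  show ?thesis unfolding graded_tensor_def mem_Collect_eq
    by (rule exI[where x=n'], rule exI[where x=xs'], rule exI[where x=fs']) (use rep eq pr in simp)
qed

lemma stepC: assumes Z: "Z \<in> graded_tensor sc N m \<sigma> \<xi> Iid" shows "Z \<in> I"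
proof -
  obtain n xs fs where Zeq: "Z = (\<lambda>k. \<Sum>j<(n::nat). tns sc (xs j) (fs j) k)"
    and pr: "\<forall>j<n. \<exists>c. valid_exp N c \<and> xs j \<in> gc c \<and> fs j \<in> Iid \<inter> laurent_cls N m c"
    using Z unfolding graded_tensor_def mem_Collect_eq by blast
  have each: "tns sc (xs j) (fs j) \<in> I" if j: "j < n" for j
  proof -
    obtain c where c: "valid_exp N c" "xs j \<in> gc c" "fs j \<in> Iid" "fs j \<in> laurent_cls N m c"
      using pr j by blast
    show ?thesis
    proof (cases "fs j = (\<lambda>_. 0)")
      case True
      then show ?thesis by (simp add: tns_zero I_zero)
    next
      case False
      then obtain k where k: "fs j k \<noteq> 0" by auto
      then have ck: "cls N m k = c" using c(4) by (auto simp: laurent_cls_def)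
      then have cG: "c \<in> Gset" using cls_in_G by metis
      have rs: "restr c (fs j) = fs j" using c(4) by (auto simp: laurent_cls_def restr_def fun_eq_iff)
      have sh: "shift (\<lambda>_. 0) (fs j) = fs j" by (simp add: shift_def)
      have fJ: "fs j \<in> Jset" using c(3) Iid_J by blast
      have "cls N m (\<lambda>_. 0) = cls N m (\<lambda>i. c i - c i)" by simp
      moreover have "valid_exp N (\<lambda>_. 0)" by (simp add: valid_exp_def)
      ultimately have "tns sc (xs j) (shift (\<lambda>_. 0) (restr c (fs j))) \<in> I"
        using fJ cG c(2) unfolding Jset_def by blast
      then show ?thesis using rs sh by simp
    qed
  qed
  show ?thesis unfolding Zeq by (rule I_sum) (simp_all add: each)
qed

theorem main: "I = L \<inter> g_tensor sc Iid \<and> L \<inter> g_tensor sc Iid = graded_tensor sc N m \<sigma> \<xi> Iid"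
proof -
  have 1: "I \<subseteq> L \<inter> g_tensor sc Iid" using I_L stepA by blast
  have 2: "L \<inter> g_tensor sc Iid \<subseteq> graded_tensor sc N m \<sigma> \<xi> Iid" using stepB by blast
  have 3: "graded_tensor sc N m \<sigma> \<xi> Iid \<subseteq> I" using stepC by blast
  show ?thesis using 1 2 3 by blast
qed

end

theorem proposition2p3:
  fixes sc :: "'f::field_char_0 \<Rightarrow> 'v::ab_group_add \<Rightarrow> 'v"
    and br :: "'v \<Rightarrow> 'v \<Rightarrow> 'v"
    and N :: nat and m :: "nat \<Rightarrow> nat"
    and \<sigma> :: "nat \<Rightarrow> 'v \<Rightarrow> 'v" and \<xi> :: "nat \<Rightarrow> 'f"
    and B :: "(nat \<Rightarrow> int) \<Rightarrow> 'v set"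
    and \<I> :: "((nat \<Rightarrow> int) \<Rightarrow> 'v) set"
  assumes "alg_closed_field TYPE('f)"
    and "simple_lie_algebra sc br"
    and "\<And>i. i < N \<Longrightarrow> lie_automorphism sc br (\<sigma> i)"
    and "\<And>i j. i < N \<Longrightarrow> j < N \<Longrightarrow> \<sigma> i \<circ> \<sigma> j = \<sigma> j \<circ> \<sigma> i"
    and "\<And>i. i < N \<Longrightarrow> has_order (\<sigma> i) (m i)"
    and "\<And>i. i < N \<Longrightarrow> primitive_root (\<xi> i) (m i)"
    and "\<And>k. valid_exp N k \<Longrightarrow>
           \<not> module.dependent sc (B (cls N m k)) \<and>
           module.span sc (B (cls N m k)) = g_cls sc N \<sigma> \<xi> (cls N m k)"
    and "multiloop_ideal sc br N \<sigma> \<xi> \<I>"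
  shows "\<I> = multiloop sc N \<sigma> \<xi> \<inter> g_tensor sc (assoc_ideal sc N m B \<I>)
       \<and> multiloop sc N \<sigma> \<xi> \<inter> g_tensor sc (assoc_ideal sc N m B \<I>)
           = graded_tensor sc N m \<sigma> \<xi> (assoc_ideal sc N m B \<I>)"
proof -
  obtain Bs where Bs: "finite_dimensional_vector_space sc Bs"
    using assms(2) by (auto simp: simple_lie_algebra_def fd_lie_algebra_def)
  interpret mlI sc br N m \<sigma> \<xi> Bs B \<I>
    by (rule mlI.intro[OF ml.intro[OF Bs assms(1-6)]], unfold_locales) (use assms(7,8) in auto)
  show ?thesis by (rule main)
qed

end
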